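(* In a Bayesian network with source $X$ (as in the context), let $W$ be a node and $V$ a set of nodes with $W\notin V$, $W\neq X$ and $W>v$ for all $v\in V$. Then for all $t\ge0$, $$F_{V\cup\{W\}|X}(t)\le F_{V|X}(t)+F_W^c\big(F_{V\cup\mathrm{pa}(W)|X}(t)-F_{V|X}(t)\big),$$ $$F^c_{V\cup\{W\}|X}(t)\le F^c_{V|X}(t)+F_W^c\big(F^c_{V\cup\mathrm{pa}(W)|X}(t)-F^c_{V|X}(t)\big).$$ Furthermore, the right-hand side of the second inequality, as a function of $t\ge0$, is non-negative, concave, nondecreasing and bounded above by $t$.
   Context: Bayesian network: finite directed acyclic graph of random variables $Y_v$ on finite alphabets, each non-source vertex with kernel $P_{Y_v|Y_{\mathrm{pa}(v)}}$, distinguished parentless source $X$, topologically sorted vertices ($v_1>v_2$ implies no directed path from $v_1$ to $v_2$); $P_{V|X}$ is the induced kernel from $X$ to $(Y_v)_{v\in V}$. For a channel $P_{B|A}$, its $F_I$-curve is $F_I(t,P_{B|A})=\sup\{I(U;B): I(U;A)\le t\}$, the supremum over all joint laws $P_{UAB}=P_{UA}P_{B|A}$ (i.e. $U\to A\to B$), and $F_I^c(t,P_{B|A})$ is its least concave majorant on $t\ge0$. Notation: $F_{V|X}=F_I(\cdot,P_{V|X})$, $F^c_{V|X}=F^c_I(\cdot,P_{V|X})$, $F_W^c=F_I^c(\cdot,P_{Y_W|Y_{\mathrm{pa}(W)}})$. *)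

theory Defs
  imports "HOL-Analysis.Analysis"
begin

definition mutual_info :: "'u set \<Rightarrow> 'b set \<Rightarrow> ('u \<Rightarrow> 'b \<Rightarrow> real) \<Rightarrow> real" where
  "mutual_info SU SB p =
     (\<Sum>u\<in>SU. \<Sum>b\<in>SB. if p u b = 0 then 0
        else p u b * ln (p u b / ((\<Sum>b'\<in>SB. p u b') * (\<Sum>u'\<in>SU. p u' b))))"

definition is_pmf2 :: "'u set \<Rightarrow> 'a set \<Rightarrow> ('u \<Rightarrow> 'a \<Rightarrow> real) \<Rightarrow> bool" where
  "is_pmf2 SU SA p \<longleftrightarrow> finite SU \<and> finite SA \<and>
     (\<forall>u\<in>SU. \<forall>a\<in>SA. 0 \<le> p u a) \<and> (\<Sum>u\<in>SU. \<Sum>a\<in>SA. p u a) = 1"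

text \<open>F_I-curve of the channel with input alphabet SA, output alphabet SB and kernel
  K a b = P(B = b | A = a): supremum of I(U;B) over all auxiliary U (finite alphabet,
  embedded in nat) with U - A - B and I(U;A) \<le> t.\<close>
definition F_I :: "'a set \<Rightarrow> 'b set \<Rightarrow> ('a \<Rightarrow> 'b \<Rightarrow> real) \<Rightarrow> real \<Rightarrow> real" where
  "F_I SA SB K t = Sup {mutual_info SU SB (\<lambda>u b. \<Sum>a\<in>SA. p u a * K a b) | (SU :: nat set) p.
       is_pmf2 SU SA p \<and> mutual_info SU SA p \<le> t}"

definition concave_majorant :: "(real \<Rightarrow> real) \<Rightarrow> real \<Rightarrow> real" where
  "concave_majorant F t = Inf {g t | g. concave_on {0..} g \<and> (\<forall>s\<ge>0. F s \<le> g s)}"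

definition F_I_c :: "'a set \<Rightarrow> 'b set \<Rightarrow> ('a \<Rightarrow> 'b \<Rightarrow> real) \<Rightarrow> real \<Rightarrow> real" where
  "F_I_c SA SB K = concave_majorant (F_I SA SB K)"

text \<open>Vertex set Vs (finite), parent map pa, alphabets A v (finite, nonempty,
  all inside a common value type 'a), kernels K v y b = P(Y_v = b | Y_pa(v) = y)
  for parent configurations y \<in> PiE (pa v) A, and a parentless source X.
  Topological sorting: every edge u \<rightarrow> v satisfies u < v.\<close>
definition bayes_net ::
  "'v::linorder set \<Rightarrow> ('v \<Rightarrow> 'v set) \<Rightarrow> ('v \<Rightarrow> 'a set) \<Rightarrow> ('v \<Rightarrow> ('v \<Rightarrow> 'a) \<Rightarrow> 'a \<Rightarrow> real) \<Rightarrow> 'v \<Rightarrow> bool" where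
  "bayes_net Vs pa A K X \<longleftrightarrow> finite Vs \<and> X \<in> Vs \<and> pa X = {} \<and>
     (\<forall>v\<in>Vs. pa v \<subseteq> Vs \<and> (\<forall>u\<in>pa v. u < v)) \<and>
     (\<forall>v\<in>Vs. finite (A v) \<and> A v \<noteq> {}) \<and>
     (\<forall>v\<in>Vs - {X}. \<forall>y\<in>PiE (pa v) A.
        (\<forall>b\<in>A v. 0 \<le> K v y b) \<and> (\<Sum>b\<in>A v. K v y b) = 1)"

text \<open>Induced kernel P_{V|X}(y | x) for a configuration y \<in> PiE V A.\<close>
definition net_kernel ::
  "'v set \<Rightarrow> ('v \<Rightarrow> 'v set) \<Rightarrow> ('v \<Rightarrow> 'a set) \<Rightarrow> ('v \<Rightarrow> ('v \<Rightarrow> 'a) \<Rightarrow> 'a \<Rightarrow> real) \<Rightarrow> 'v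
     \<Rightarrow> 'v set \<Rightarrow> 'a \<Rightarrow> ('v \<Rightarrow> 'a) \<Rightarrow> real" where
  "net_kernel Vs pa A K X V x y =
     (\<Sum>z\<in>{z \<in> PiE Vs A. z X = x \<and> restrict z V = y}.
        \<Prod>v\<in>Vs - {X}. K v (restrict z (pa v)) (z v))"

definition net_F ::
  "'v set \<Rightarrow> ('v \<Rightarrow> 'v set) \<Rightarrow> ('v \<Rightarrow> 'a set) \<Rightarrow> ('v \<Rightarrow> ('v \<Rightarrow> 'a) \<Rightarrow> 'a \<Rightarrow> real) \<Rightarrow> 'v
     \<Rightarrow> 'v set \<Rightarrow> real \<Rightarrow> real" where
  "net_F Vs pa A K X V = F_I (A X) (PiE V A) (net_kernel Vs pa A K X V)"

definition net_F_c ::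
  "'v set \<Rightarrow> ('v \<Rightarrow> 'v set) \<Rightarrow> ('v \<Rightarrow> 'a set) \<Rightarrow> ('v \<Rightarrow> ('v \<Rightarrow> 'a) \<Rightarrow> 'a \<Rightarrow> real) \<Rightarrow> 'v
     \<Rightarrow> 'v set \<Rightarrow> real \<Rightarrow> real" where
  "net_F_c Vs pa A K X V = F_I_c (A X) (PiE V A) (net_kernel Vs pa A K X V)"

definition node_F_c ::
  "('v \<Rightarrow> 'v set) \<Rightarrow> ('v \<Rightarrow> 'a set) \<Rightarrow> ('v \<Rightarrow> ('v \<Rightarrow> 'a) \<Rightarrow> 'a \<Rightarrow> real) \<Rightarrow> 'v \<Rightarrow> real \<Rightarrow> real" where
  "node_F_c pa A K W = F_I_c (PiE (pa W) A) (A W) (K W)"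

end

theory Submission
  imports Defs
begin


lemma ln_ge_1_minus_inv: "z > 0 \<Longrightarrow> 1 - 1 / z \<le> ln (z::real)"
proof -
  assume z: "z > 0"
  have "ln (1/z) \<le> 1/z - 1" using z by (intro ln_le_minus_one) simp
  moreover have "ln (1/z) = - ln z" using z by (simp add: ln_div)
  ultimately show ?thesis by simp
qed

lemma logsum_pt:
  fixes x y XX YY :: real
  assumes "x > 0" "y > 0" "XX > 0" "YY > 0"
  shows "x * ln (XX/YY) + x - y * XX / YY \<le> x * ln (x / y)"
proof -
  define z where "z = (x * YY) / (y * XX)"
  have zp: "z > 0" using assms by (simp add: z_def)
  have "x / y = (XX/YY) * z" using assms by (simp add: z_def field_simps)
  moreover have "ln ((XX/YY) * z) = ln (XX/YY) + ln z" using assms zp by (intro ln_mult_pos) auto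
  ultimately have "ln (x/y) = ln (XX/YY) + ln z" by simp
  moreover have "x * (1 - 1/z) \<le> x * ln z" using ln_ge_1_minus_inv[OF zp] assms by (simp add: mult_left_mono)
  moreover have "x * (1 - 1/z) = x - y * XX / YY" using assms by (simp add: z_def field_simps)
  ultimately show ?thesis by (simp add: algebra_simps)
qed

lemma logsum:
  fixes x y :: "'a \<Rightarrow> real"
  assumes fin: "finite S" and x0: "\<forall>a\<in>S. 0 \<le> x a" and y0: "\<forall>a\<in>S. 0 \<le> y a"
    and xy: "\<forall>a\<in>S. x a > 0 \<longrightarrow> y a > 0"
  shows "(\<Sum>a\<in>S. x a) * ln ((\<Sum>a\<in>S. x a) / (\<Sum>a\<in>S. y a))
           \<le> (\<Sum>a\<in>S. if x a = 0 then 0 else x a * ln (x a / y a))"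
proof (cases "(\<Sum>a\<in>S. x a) = 0")
  case True
  hence "\<forall>a\<in>S. x a = 0" using sum_nonneg_eq_0_iff[OF fin] x0 by blast
  thus ?thesis using True by simp
next
  case False
  define XX where "XX = (\<Sum>a\<in>S. x a)"
  define YY where "YY = (\<Sum>a\<in>S. y a)"
  have XXp: "XX > 0" using False x0 sum_nonneg[of S x] unfolding XX_def by force
  then obtain a0 where a0: "a0 \<in> S" "x a0 > 0" using x0 unfolding XX_def
    by (metis less_eq_real_def not_less sum_nonpos)
  have "y a0 > 0" using xy a0 by blast
  hence YYp: "YY > 0" unfolding YY_def using y0 a0 fin
    using member_le_sum[of a0 S y] by (smt (verit) DiffD1)
  have pt: "x a * ln (XX/YY) + x a - y a * XX / YY \<le> (if x a = 0 then 0 else x a * ln (x a / y a))"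
    if "a \<in> S" for a
  proof (cases "x a = 0")
    case True
    then show ?thesis using y0 that XXp YYp by simp
  next
    case False
    hence "x a > 0" using x0 that by force
    then show ?thesis using logsum_pt[of "x a" "y a" XX YY] xy that XXp YYp False by simp
  qed
  have "(\<Sum>a\<in>S. x a * ln (XX/YY) + x a - y a * XX / YY) \<le> (\<Sum>a\<in>S. if x a = 0 then 0 else x a * ln (x a / y a))"
    by (rule sum_mono) (use pt in auto)
  moreover have "(\<Sum>a\<in>S. x a * ln (XX/YY) + x a - y a * XX / YY) = XX * ln (XX/YY) + XX - YY * XX / YY"
    unfolding XX_def YY_def by (simp add: sum.distrib sum_subtractf sum_distrib_right sum_divide_distrib)
  moreover have "YY * XX / YY = XX" using YYp by simp
  ultimately show ?thesis unfolding XX_def[symmetric] YY_def[symmetric] by simp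
qed

lemma dpi:
  fixes r :: "'u \<Rightarrow> 'a \<Rightarrow> real" and K :: "'a \<Rightarrow> 'b \<Rightarrow> real"
  assumes fU: "finite SU" and fA: "finite SA" and fB: "finite SB"
    and r0: "\<forall>u\<in>SU. \<forall>a\<in>SA. 0 \<le> r u a" and K0: "\<forall>a\<in>SA. \<forall>b\<in>SB. 0 \<le> K a b"
    and K1: "\<forall>a\<in>SA. (\<Sum>b\<in>SB. K a b) = 1"
  shows "mutual_info SU SB (\<lambda>u b. \<Sum>a\<in>SA. r u a * K a b) \<le> mutual_info SU SA r"
proof -
  define Pu where "Pu u = (\<Sum>a\<in>SA. r u a)" for u
  define Pa where "Pa a = (\<Sum>u\<in>SU. r u a)" for a
  define q where "q u b = (\<Sum>a\<in>SA. r u a * K a b)" for u b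
  define Qb where "Qb b = (\<Sum>u\<in>SU. q u b)" for b
  have rowq: "(\<Sum>b\<in>SB. q u b) = Pu u" for u
  proof -
    have "(\<Sum>b\<in>SB. q u b) = (\<Sum>a\<in>SA. \<Sum>b\<in>SB. r u a * K a b)" unfolding q_def by (rule sum.swap)
    also have "\<dots> = (\<Sum>a\<in>SA. r u a * (\<Sum>b\<in>SB. K a b))" by (simp add: sum_distrib_left)
    also have "\<dots> = Pu u" unfolding Pu_def using K1 by simp
    finally show ?thesis .
  qed
  have colq: "(\<Sum>a\<in>SA. Pu u * Pa a * K a b) = Pu u * Qb b" for u b
  proof -
    have "(\<Sum>a\<in>SA. Pa a * K a b) = (\<Sum>a\<in>SA. \<Sum>u\<in>SU. r u a * K a b)" unfolding Pa_def by (simp add: sum_distrib_right)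
    also have "\<dots> = Qb b" unfolding Qb_def q_def by (rule sum.swap)
    finally show ?thesis by (simp add: sum_distrib_left[symmetric] mult.assoc)
  qed
  have pt: "(if r u a = 0 then 0 else r u a * ln (r u a / (Pu u * Pa a)))
      = (\<Sum>b\<in>SB. if r u a * K a b = 0 then 0 else r u a * K a b * ln (r u a * K a b / (Pu u * Pa a * K a b)))"
    if u: "u \<in> SU" and a: "a \<in> SA" for u a
  proof (cases "r u a = 0")
    case True then show ?thesis by simp
  next
    case False
    have "(\<Sum>b\<in>SB. if r u a * K a b = 0 then 0 else r u a * K a b * ln (r u a * K a b / (Pu u * Pa a * K a b)))
        = (\<Sum>b\<in>SB. r u a * K a b * ln (r u a / (Pu u * Pa a)))"
      by (rule sum.cong) (auto simp: False)
    also have "\<dots> = r u a * ln (r u a / (Pu u * Pa a)) * (\<Sum>b\<in>SB. K a b)"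
      by (simp add: sum_distrib_left sum_distrib_right mult_ac)
    finally show ?thesis using K1 a False by simp
  qed
  have "mutual_info SU SA r = (\<Sum>u\<in>SU. \<Sum>a\<in>SA. if r u a = 0 then 0 else r u a * ln (r u a / (Pu u * Pa a)))"
    unfolding mutual_info_def Pu_def Pa_def by simp
  also have "\<dots> = (\<Sum>u\<in>SU. \<Sum>a\<in>SA. \<Sum>b\<in>SB. if r u a * K a b = 0 then 0 else r u a * K a b * ln (r u a * K a b / (Pu u * Pa a * K a b)))"
    using pt by simp
  also have "\<dots> = (\<Sum>u\<in>SU. \<Sum>b\<in>SB. \<Sum>a\<in>SA. if r u a * K a b = 0 then 0 else r u a * K a b * ln (r u a * K a b / (Pu u * Pa a * K a b)))"
    by (simp add: sum.swap[where A=SA])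
  finally have eq1: "mutual_info SU SA r = \<dots>" .
  have ge: "q u b * ln (q u b / (Pu u * Qb b)) \<le> (\<Sum>a\<in>SA. if r u a * K a b = 0 then 0 else r u a * K a b * ln (r u a * K a b / (Pu u * Pa a * K a b)))"
    if u: "u \<in> SU" and b: "b \<in> SB" for u b
  proof -
    have pos: "Pu u * Pa a * K a b > 0" if a: "a \<in> SA" and rk: "r u a * K a b > 0" for a
    proof -
      have "r u a > 0" "K a b > 0" using rk r0 K0 u a b
        by (metis linorder_not_le mult_nonneg_nonneg order_antisym_conv zero_less_mult_iff)+
      moreover have "r u a \<le> Pu u" unfolding Pu_def using member_le_sum[of a SA "r u"] a r0 u fA by auto
      moreover have "r u a \<le> Pa a" unfolding Pa_def using member_le_sum[of u SU "\<lambda>u. r u a"] a r0 u fU by auto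
      ultimately show ?thesis by simp
    qed
    have Pu0: "0 \<le> Pu u" unfolding Pu_def using r0 u by (simp add: sum_nonneg)
    have Pa0: "0 \<le> Pa a" if "a \<in> SA" for a unfolding Pa_def using r0 that by (simp add: sum_nonneg)
    have "(\<Sum>a\<in>SA. r u a * K a b) * ln ((\<Sum>a\<in>SA. r u a * K a b) / (\<Sum>a\<in>SA. Pu u * Pa a * K a b))
       \<le> (\<Sum>a\<in>SA. if r u a * K a b = 0 then 0 else r u a * K a b * ln (r u a * K a b / (Pu u * Pa a * K a b)))"
      using fA r0 K0 u b Pu0 Pa0 pos by (intro logsum) auto
    thus ?thesis unfolding colq q_def .
  qed
  have "mutual_info SU SB q = (\<Sum>u\<in>SU. \<Sum>b\<in>SB. q u b * ln (q u b / (Pu u * Qb b)))"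
    unfolding mutual_info_def rowq Qb_def by (intro sum.cong refl) auto
  also have "\<dots> \<le> mutual_info SU SA r" unfolding eq1
    by (intro sum_mono) (use ge in auto)
  finally show ?thesis unfolding q_def .
qed


lemma mi_cong:
  assumes "\<And>u b. u \<in> SU \<Longrightarrow> b \<in> SB \<Longrightarrow> p u b = p' u b"
  shows "mutual_info SU SB p = mutual_info SU SB p'"
  unfolding mutual_info_def using assms by (intro sum.cong refl) (simp cong: sum.cong)

lemma mi_reindex:
  assumes "bij_betw g SB' SB"
  shows "mutual_info SU SB p = mutual_info SU SB' (\<lambda>u b. p u (g b))"
proof -
  have r: "(\<Sum>b\<in>SB. f b) = (\<Sum>b\<in>SB'. f (g b))" for f :: "_ \<Rightarrow> real"
    by (rule sum.reindex_bij_betw[OF assms, symmetric])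
  have rr: "(\<Sum>b'\<in>SB. p u b') = (\<Sum>b\<in>SB'. p u (g b))" for u by (rule r)
  show ?thesis unfolding mutual_info_def rr by (intro sum.cong refl) (subst r, rule refl)
qed

lemma mi_single:
  assumes "(\<Sum>a\<in>SA. p u0 a) = 1"
  shows "mutual_info {u0} SA p = 0"
  unfolding mutual_info_def using assms by simp (intro sum.neutral ballI, simp)

lemma mi_zero: "mutual_info SU SA (\<lambda>u a. 0) = 0"
  unfolding mutual_info_def by simp

lemma mi_nonneg:
  assumes "is_pmf2 SU SA r"
  shows "0 \<le> mutual_info SU SA r"
proof -
  have fin: "finite SU" "finite SA" and r0: "\<forall>u\<in>SU. \<forall>a\<in>SA. 0 \<le> r u a"
    and tot: "(\<Sum>u\<in>SU. \<Sum>a\<in>SA. r u a) = 1" using assms unfolding is_pmf2_def by auto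
  have "mutual_info SU {()} (\<lambda>u b. \<Sum>a\<in>SA. r u a * 1) \<le> mutual_info SU SA r"
    using fin r0 by (intro dpi) auto
  moreover have "mutual_info SU {()} (\<lambda>u b. \<Sum>a\<in>SA. r u a * 1) = 0"
    unfolding mutual_info_def using tot by (intro sum.neutral) auto
  ultimately show ?thesis by simp
qed

lemma chain_rule:
  fixes r :: "'u \<Rightarrow> 'y \<Rightarrow> real" and \<pi> :: "'y \<Rightarrow> 'b"
  assumes fU: "finite SU" and fY: "finite SY" and fB: "finite SB" and pi: "\<pi> ` SY \<subseteq> SB"
    and r0: "\<forall>u\<in>SU. \<forall>y\<in>SY. 0 \<le> r u y"
  shows "mutual_info SU SY r = mutual_info SU SB (\<lambda>u b. \<Sum>y\<in>{y\<in>SY. \<pi> y = b}. r u y)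
     + (\<Sum>b\<in>SB. (\<Sum>u\<in>SU. \<Sum>y\<in>{y\<in>SY. \<pi> y = b}. r u y)
          * mutual_info SU {y\<in>SY. \<pi> y = b} (\<lambda>u y. r u y / (\<Sum>u\<in>SU. \<Sum>y\<in>{y\<in>SY. \<pi> y = b}. r u y)))"
proof -
  define F where "F b = {y\<in>SY. \<pi> y = b}" for b
  define s where "s u b = (\<Sum>y\<in>F b. r u y)" for u b
  define P where "P b = (\<Sum>u\<in>SU. s u b)" for b
  define Pu where "Pu u = (\<Sum>y\<in>SY. r u y)" for u
  define Py where "Py y = (\<Sum>u\<in>SU. r u y)" for y
  have fF: "finite (F b)" for b unfolding F_def using fY by simp
  have grp: "(\<Sum>y\<in>SY. f y) = (\<Sum>b\<in>SB. \<Sum>y\<in>F b. f y)" for f :: "'y \<Rightarrow> real"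
    unfolding F_def using sum.group[OF fY fB pi, of f] by simp
  have rows: "(\<Sum>b\<in>SB. s u b) = Pu u" for u unfolding s_def Pu_def grp ..
  have le_Pu: "r u y \<le> Pu u" if "u \<in> SU" "y \<in> SY" for u y
    unfolding Pu_def using member_le_sum[of y SY "r u"] that r0 fY by auto
  have le_Py: "r u y \<le> Py y" if "u \<in> SU" "y \<in> SY" for u y
    unfolding Py_def using member_le_sum[of u SU "\<lambda>u. r u y"] that r0 fU by auto
  have le_s: "r u y \<le> s u (\<pi> y)" if "u \<in> SU" "y \<in> SY" for u y
    unfolding s_def using member_le_sum[of y "F (\<pi> y)" "r u"] that r0 fF unfolding F_def by auto
  have s0: "0 \<le> s u b" if "u \<in> SU" for u b unfolding s_def F_def using r0 that by (intro sum_nonneg) auto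
  have le_P: "s u b \<le> P b" if "u \<in> SU" for u b
    unfolding P_def using member_le_sum[of u SU "\<lambda>u. s u b"] that s0 fU by auto
  have cond: "P b * mutual_info SU (F b) (\<lambda>u y. r u y / P b)
      = (\<Sum>u\<in>SU. \<Sum>y\<in>F b. if r u y = 0 then 0 else r u y * ln (r u y * P b / (s u b * Py y)))" for b
  proof (cases "P b = 0")
    case True
    have "s u b = 0" if "u \<in> SU" for u using le_P[OF that, of b] s0[OF that, of b] True by simp
    hence "r u y = 0" if "u \<in> SU" "y \<in> F b" for u y
      using that sum_nonneg_eq_0_iff[OF fF[of b], of "r u"] r0 unfolding s_def F_def by auto
    thus ?thesis using True by (simp add: sum.neutral)
  next
    case False
    have "mutual_info SU (F b) (\<lambda>u y. r u y / P b)
       = (\<Sum>u\<in>SU. \<Sum>y\<in>F b. if r u y / P b = 0 then 0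
          else r u y / P b * ln (r u y / P b / ((\<Sum>y'\<in>F b. r u y' / P b) * (\<Sum>u'\<in>SU. r u' y / P b))))"
      unfolding mutual_info_def ..
    also have "\<dots> = (\<Sum>u\<in>SU. \<Sum>y\<in>F b. if r u y = 0 then 0
          else r u y / P b * ln (r u y * P b / (s u b * Py y)))"
    proof (intro sum.cong refl)
      fix u y assume "u \<in> SU" "y \<in> F b"
      have e: "r u y / P b / ((\<Sum>y'\<in>F b. r u y' / P b) * (\<Sum>u'\<in>SU. r u' y / P b)) = r u y * P b / (s u b * Py y)"
        unfolding s_def Py_def sum_divide_distrib[symmetric] using False by (simp add: field_simps)
      show "(if r u y / P b = 0 then 0 else r u y / P b * ln (r u y / P b / ((\<Sum>y'\<in>F b. r u y' / P b) * (\<Sum>u'\<in>SU. r u' y / P b))))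
         = (if r u y = 0 then 0 else r u y / P b * ln (r u y * P b / (s u b * Py y)))"
        using False e by simp
    qed
    finally show ?thesis using False
      by (simp add: sum_distrib_left if_distrib cong: if_cong)
  qed
  have split: "(if r u y = 0 then 0 else r u y * ln (r u y / (Pu u * Py y)))
     = (if r u y = 0 then 0 else r u y * ln (s u (\<pi> y) / (Pu u * P (\<pi> y))))
     + (if r u y = 0 then 0 else r u y * ln (r u y * P (\<pi> y) / (s u (\<pi> y) * Py y)))"
    if u: "u \<in> SU" and y: "y \<in> SY" for u y
  proof (cases "r u y = 0")
    case True then show ?thesis by simp
  next
    case False
    hence rp: "r u y > 0" using r0 u y by force
    have p1: "Pu u > 0" using le_Pu[OF u y] rp by simp
    have p2: "Py y > 0" using le_Py[OF u y] rp by simp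
    have p3: "s u (\<pi> y) > 0" using le_s[OF u y] rp by simp
    have p4: "P (\<pi> y) > 0" using le_P[OF u, of "\<pi> y"] p3 by simp
    have "r u y / (Pu u * Py y) = (s u (\<pi> y) / (Pu u * P (\<pi> y))) * (r u y * P (\<pi> y) / (s u (\<pi> y) * Py y))"
      using p1 p2 p3 p4 by (simp add: field_simps)
    moreover have "ln ((s u (\<pi> y) / (Pu u * P (\<pi> y))) * (r u y * P (\<pi> y) / (s u (\<pi> y) * Py y)))
       = ln (s u (\<pi> y) / (Pu u * P (\<pi> y))) + ln (r u y * P (\<pi> y) / (s u (\<pi> y) * Py y))"
      using p1 p2 p3 p4 rp by (intro ln_mult_pos) auto
    ultimately have "ln (r u y / (Pu u * Py y)) = ln (s u (\<pi> y) / (Pu u * P (\<pi> y))) + ln (r u y * P (\<pi> y) / (s u (\<pi> y) * Py y))"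
      by simp
    then show ?thesis using False by (simp add: algebra_simps)
  qed
  have "mutual_info SU SY r = (\<Sum>u\<in>SU. \<Sum>y\<in>SY. if r u y = 0 then 0 else r u y * ln (r u y / (Pu u * Py y)))"
    unfolding mutual_info_def Pu_def Py_def ..
  also have "\<dots> = (\<Sum>u\<in>SU. \<Sum>y\<in>SY. if r u y = 0 then 0 else r u y * ln (s u (\<pi> y) / (Pu u * P (\<pi> y))))
     + (\<Sum>u\<in>SU. \<Sum>y\<in>SY. if r u y = 0 then 0 else r u y * ln (r u y * P (\<pi> y) / (s u (\<pi> y) * Py y)))"
    using split by (simp add: sum.distrib)
  also have "(\<Sum>u\<in>SU. \<Sum>y\<in>SY. if r u y = 0 then 0 else r u y * ln (s u (\<pi> y) / (Pu u * P (\<pi> y))))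
      = mutual_info SU SB s"
  proof -
    have "(\<Sum>y\<in>SY. if r u y = 0 then 0 else r u y * ln (s u (\<pi> y) / (Pu u * P (\<pi> y))))
        = (\<Sum>b\<in>SB. if s u b = 0 then 0 else s u b * ln (s u b / ((\<Sum>b'\<in>SB. s u b') * (\<Sum>u'\<in>SU. s u' b))))"
      if u: "u \<in> SU" for u
    proof -
      have "(\<Sum>y\<in>F b. if r u y = 0 then 0 else r u y * ln (s u (\<pi> y) / (Pu u * P (\<pi> y))))
          = (if s u b = 0 then 0 else s u b * ln (s u b / ((\<Sum>b'\<in>SB. s u b') * (\<Sum>u'\<in>SU. s u' b))))" for b
      proof -
        have "(\<Sum>y\<in>F b. if r u y = 0 then 0 else r u y * ln (s u (\<pi> y) / (Pu u * P (\<pi> y))))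
            = (\<Sum>y\<in>F b. r u y * ln (s u b / (Pu u * P b)))"
          by (intro sum.cong refl) (auto simp: F_def)
        also have "\<dots> = s u b * ln (s u b / (Pu u * P b))" unfolding s_def by (simp add: sum_distrib_right)
        finally show ?thesis unfolding rows P_def by simp
      qed
      thus ?thesis by (simp add: grp)
    qed
    thus ?thesis unfolding mutual_info_def by simp
  qed
  also have "(\<Sum>u\<in>SU. \<Sum>y\<in>SY. if r u y = 0 then 0 else r u y * ln (r u y * P (\<pi> y) / (s u (\<pi> y) * Py y)))
      = (\<Sum>b\<in>SB. P b * mutual_info SU (F b) (\<lambda>u y. r u y / P b))"
  proof -
    have "(\<Sum>u\<in>SU. \<Sum>y\<in>SY. if r u y = 0 then 0 else r u y * ln (r u y * P (\<pi> y) / (s u (\<pi> y) * Py y)))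
       = (\<Sum>u\<in>SU. \<Sum>b\<in>SB. \<Sum>y\<in>F b. if r u y = 0 then 0 else r u y * ln (r u y * P b / (s u b * Py y)))"
      unfolding grp by (intro sum.cong refl) (auto simp: F_def)
    also have "\<dots> = (\<Sum>b\<in>SB. \<Sum>u\<in>SU. \<Sum>y\<in>F b. if r u y = 0 then 0 else r u y * ln (r u y * P b / (s u b * Py y)))"
      by (rule sum.swap)
    finally show ?thesis unfolding cond by simp
  qed
  finally show ?thesis unfolding F_def s_def P_def by simp
qed


section \<open>F_I curve\<close>

definition FIset :: "'a set \<Rightarrow> 'b set \<Rightarrow> ('a \<Rightarrow> 'b \<Rightarrow> real) \<Rightarrow> real \<Rightarrow> real set" where
  "FIset SA SB K t = {mutual_info SU SB (\<lambda>u b. \<Sum>a\<in>SA. p u a * K a b) | (SU :: nat set) p.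
       is_pmf2 SU SA p \<and> mutual_info SU SA p \<le> t}"

lemma F_I_eq: "F_I SA SB K t = Sup (FIset SA SB K t)"
  unfolding F_I_def FIset_def ..

locale chan =
  fixes SA :: "'a set" and SB :: "'b set" and K :: "'a \<Rightarrow> 'b \<Rightarrow> real"
  assumes fA: "finite SA" and nA: "SA \<noteq> {}" and fB: "finite SB"
    and K0: "\<forall>a\<in>SA. \<forall>b\<in>SB. 0 \<le> K a b" and K1: "\<forall>a\<in>SA. (\<Sum>b\<in>SB. K a b) = 1"
begin

lemma FIset_le: "x \<in> FIset SA SB K t \<Longrightarrow> x \<le> t"
proof -
  assume "x \<in> FIset SA SB K t"
  then obtain SU :: "nat set" and p where x: "x = mutual_info SU SB (\<lambda>u b. \<Sum>a\<in>SA. p u a * K a b)"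
    and pm: "is_pmf2 SU SA p" and le: "mutual_info SU SA p \<le> t" unfolding FIset_def by blast
  have "x \<le> mutual_info SU SA p" unfolding x using pm fB K0 K1 unfolding is_pmf2_def by (intro dpi) auto
  thus ?thesis using le by simp
qed

lemma FIset_0: "t \<ge> 0 \<Longrightarrow> 0 \<in> FIset SA SB K t"
proof -
  assume t: "t \<ge> 0"
  obtain a0 where a0: "a0 \<in> SA" using nA by blast
  define p :: "nat \<Rightarrow> 'a \<Rightarrow> real" where "p u a = (if a = a0 then 1 else 0)" for u a
  have s1: "(\<Sum>a\<in>SA. p 0 a) = 1" unfolding p_def using fA a0 by simp
  have pm: "is_pmf2 {0} SA p" unfolding is_pmf2_def using fA s1 by (auto simp: p_def)
  have m0: "mutual_info {0} SA p = 0" using mi_single[of p 0 SA] s1 by simp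
  have "(\<Sum>b\<in>SB. \<Sum>a\<in>SA. p 0 a * K a b) = 1"
  proof -
    have "(\<Sum>b\<in>SB. \<Sum>a\<in>SA. p 0 a * K a b) = (\<Sum>b\<in>SB. K a0 b)"
      unfolding p_def using fA a0 by (simp add: if_distrib[of "\<lambda>x. x * _"] cong: if_cong)
    thus ?thesis using K1 a0 by simp
  qed
  hence "mutual_info {0} SB (\<lambda>u b. \<Sum>a\<in>SA. p u a * K a b) = 0" by (intro mi_single) simp
  thus ?thesis unfolding FIset_def using pm m0 t by force
qed

lemma FI_bounds: "t \<ge> 0 \<Longrightarrow> 0 \<le> F_I SA SB K t \<and> F_I SA SB K t \<le> t"
proof -
  assume t: "t \<ge> 0"
  have bdd: "bdd_above (FIset SA SB K t)" using FIset_le by (intro bdd_aboveI) blast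
  have "0 \<le> F_I SA SB K t" unfolding F_I_eq using FIset_0[OF t] bdd by (intro cSup_upper) auto
  moreover have "F_I SA SB K t \<le> t" unfolding F_I_eq using FIset_0[OF t] FIset_le
    by (intro cSup_least) auto
  ultimately show ?thesis by simp
qed

lemma FI_ge:
  fixes SU :: "nat set"
  assumes "is_pmf2 SU SA p" "mutual_info SU SA p \<le> t"
  shows "mutual_info SU SB (\<lambda>u b. \<Sum>a\<in>SA. p u a * K a b) \<le> F_I SA SB K t"
proof -
  have bdd: "bdd_above (FIset SA SB K t)" using FIset_le by (intro bdd_aboveI) blast
  show ?thesis unfolding F_I_eq using assms bdd unfolding FIset_def by (intro cSup_upper) auto
qed

end

section \<open>Concave majorant\<close>

lemma concave_id: "concave_on {0..} (\<lambda>x::real. x)"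
  unfolding concave_on_iff by (auto simp: convex_real_interval)

lemma concave_nonneg_mono:
  fixes f :: "real \<Rightarrow> real"
  assumes cf: "concave_on {0..} f" and f0: "\<forall>s\<ge>0. 0 \<le> f s" and a: "0 \<le> a" and ab: "a \<le> b"
  shows "f a \<le> f b"
proof (rule ccontr)
  assume "\<not> f a \<le> f b"
  hence lt: "f b < f a" by simp
  hence ab': "a < b" using ab by (cases "a = b") auto
  define d where "d = f a - f b"
  have dp: "d > 0" using lt by (simp add: d_def)
  have fa: "f a > 0" using f0 lt ab a by (meson dual_order.trans le_less_trans)
  define lam where "lam = d / (2 * f a + d)"
  define c where "c = a + (b - a) / lam"
  have l0: "0 < lam" "lam < 1" using dp fa by (auto simp: lam_def field_simps)
  have c0: "c \<ge> 0" using l0 a ab' by (simp add: c_def)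
  have mid: "(1 - lam) *\<^sub>R a + lam *\<^sub>R c = b" using l0 by (simp add: c_def field_simps)
  have "f ((1 - lam) *\<^sub>R a + lam *\<^sub>R c) \<ge> (1 - lam) * f a + lam * f c"
    using concave_onD[OF cf, of lam a c] l0 a c0 by auto
  hence "f b \<ge> (1 - lam) * f a" using mid f0 c0 l0 by (smt (verit) mult_nonneg_nonneg)
  hence "d \<le> lam * f a" unfolding d_def by (simp add: algebra_simps)
  moreover have "lam * f a < d" using dp fa unfolding lam_def by (simp add: field_simps add_pos_pos mult_pos_pos)
  ultimately show False by simp
qed

lemma concave_lip:
  fixes f :: "real \<Rightarrow> real"
  assumes cf: "concave_on {0..} f" and f0: "0 \<le> f 0" and fle: "\<forall>s\<ge>0. f s \<le> s"
    and d1: "0 \<le> d1" and d12: "d1 \<le> d2"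
  shows "f d2 - f d1 \<le> d2 - d1"
proof (cases "d2 = 0")
  case True then show ?thesis using d1 d12 by simp
next
  case False
  hence d2p: "d2 > 0" using d1 d12 by simp
  define \<mu> where "\<mu> = d1 / d2"
  have m: "0 \<le> \<mu>" "\<mu> \<le> 1" using d1 d12 d2p by (auto simp: \<mu>_def field_simps)
  have "f ((1 - \<mu>) *\<^sub>R 0 + \<mu> *\<^sub>R d2) \<ge> (1 - \<mu>) * f 0 + \<mu> * f d2"
    using concave_onD[OF cf, of \<mu> 0 d2] m d2p by auto
  moreover have "(1 - \<mu>) *\<^sub>R 0 + \<mu> *\<^sub>R d2 = d1" using d2p by (simp add: \<mu>_def)
  ultimately have "f d1 \<ge> \<mu> * f d2" using f0 m by (smt (verit) mult_nonneg_nonneg)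
  moreover have "(1 - \<mu>) * f d2 \<le> (1 - \<mu>) * d2" using fle d2p m by (intro mult_left_mono) auto
  moreover have "(1 - \<mu>) * d2 = d2 - d1" using d2p by (simp add: \<mu>_def field_simps)
  ultimately show ?thesis by (simp add: algebra_simps)
qed

locale cmaj =
  fixes F :: "real \<Rightarrow> real"
  assumes Fb: "\<forall>s\<ge>0. 0 \<le> F s \<and> F s \<le> s"
begin

definition CS where "CS t = {g t | g. concave_on {0..} g \<and> (\<forall>s\<ge>0. F s \<le> g s)}"

lemma cm_eq: "concave_majorant F t = Inf (CS t)"
  unfolding concave_majorant_def CS_def ..

lemma CS_ne: "t \<in> CS t" unfolding CS_def using concave_id Fb by force

lemma cm_ge: "t \<ge> 0 \<Longrightarrow> F t \<le> concave_majorant F t"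
  unfolding cm_eq using CS_ne by (intro cInf_greatest) (auto simp: CS_def)

lemma cm_le: "t \<ge> 0 \<Longrightarrow> concave_on {0..} G \<Longrightarrow> \<forall>s\<ge>0. F s \<le> G s \<Longrightarrow> concave_majorant F t \<le> G t"
  unfolding cm_eq
  by (rule cInf_lower) (auto simp: CS_def bdd_below_def intro!: exI[of _ "F t"])

lemma cm_le_id: "t \<ge> 0 \<Longrightarrow> concave_majorant F t \<le> t"
  using cm_le[of t "\<lambda>x. x"] concave_id Fb by auto

lemma cm_nonneg: "t \<ge> 0 \<Longrightarrow> 0 \<le> concave_majorant F t"
  using cm_ge Fb by (meson order_trans)

lemma cm_concave: "concave_on {0..} (concave_majorant F)"
  unfolding concave_on_iff
proof (intro conjI ballI allI impI)
  show "convex {0::real..}" by (simp add: convex_real_interval)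
  fix x y :: real and u v :: real
  assume x: "x \<in> {0..}" and y: "y \<in> {0..}" and u: "0 \<le> u" and v: "0 \<le> v" and uv: "u + v = 1"
  have m0: "u *\<^sub>R x + v *\<^sub>R y \<ge> 0" using x y u v by simp
  show "u * concave_majorant F x + v * concave_majorant F y \<le> concave_majorant F (u *\<^sub>R x + v *\<^sub>R y)"
    unfolding cm_eq[of "u *\<^sub>R x + v *\<^sub>R y"]
  proof (rule cInf_greatest)
    show "CS (u *\<^sub>R x + v *\<^sub>R y) \<noteq> {}" using CS_ne by blast
    fix z assume "z \<in> CS (u *\<^sub>R x + v *\<^sub>R y)"
    then obtain g where z: "z = g (u *\<^sub>R x + v *\<^sub>R y)" and g: "concave_on {0..} g" "\<forall>s\<ge>0. F s \<le> g s"
      unfolding CS_def by blast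
    have "u * g x + v * g y \<le> z" unfolding z using g(1) x y u v uv unfolding concave_on_iff by blast
    moreover have "concave_majorant F x \<le> g x" using cm_le g x by auto
    moreover have "concave_majorant F y \<le> g y" using cm_le g y by auto
    ultimately show "u * concave_majorant F x + v * concave_majorant F y \<le> z"
      using u v by (smt (verit) mult_left_mono)
  qed
qed

lemma cm_mono: "0 \<le> a \<Longrightarrow> a \<le> b \<Longrightarrow> concave_majorant F a \<le> concave_majorant F b"
  using concave_nonneg_mono[OF cm_concave] cm_nonneg by blast

lemma cm_lip: "0 \<le> d1 \<Longrightarrow> d1 \<le> d2 \<Longrightarrow> concave_majorant F d2 - concave_majorant F d1 \<le> d2 - d1"
  using concave_lip[OF cm_concave] cm_nonneg cm_le_id by auto

end

lemma cm_compare: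
  assumes "cmaj F1" "cmaj F2" "\<forall>s\<ge>0. F1 s \<le> F2 s" "t \<ge> 0"
  shows "concave_majorant F1 t \<le> concave_majorant F2 t"
  using cmaj.cm_le[OF assms(1) assms(4) cmaj.cm_concave[OF assms(2)]] cmaj.cm_ge[OF assms(2)] assms(3)
  by (meson order_trans)




section \<open>Network combinatorics\<close>

lemma sum_PiE_insert:
  assumes "x \<notin> S"
  shows "(\<Sum>f\<in>PiE (insert x S) T. g f) = (\<Sum>a\<in>T x. \<Sum>f\<in>PiE S T. g (f(x := a)))"
proof -
  have "(\<Sum>f\<in>PiE (insert x S) T. g f) = (\<Sum>p\<in>T x \<times> PiE S T. g ((\<lambda>(y, f). f(x := y)) p))"
    unfolding PiE_insert_eq by (rule sum.reindex[OF inj_combinator[OF assms], unfolded comp_def])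
  also have "\<dots> = (\<Sum>a\<in>T x. \<Sum>f\<in>PiE S T. g (f(x := a)))"
    unfolding sum.cartesian_product by (intro sum.cong) auto
  finally show ?thesis .
qed

lemma sum_split_PiE:
  fixes A :: "'i \<Rightarrow> 'x set" and f :: "('i \<Rightarrow> 'x) \<Rightarrow> 'r::comm_monoid_add"
  assumes "H \<subseteq> I"
  shows "(\<Sum>z\<in>PiE I A. f z) = (\<Sum>l\<in>PiE (I - H) A. \<Sum>h\<in>PiE H A. f (\<lambda>w. if w \<in> H then h w else l w))"
proof -
  define mg :: "('i \<Rightarrow> 'x) \<times> ('i \<Rightarrow> 'x) \<Rightarrow> 'i \<Rightarrow> 'x" where "mg = (\<lambda>(l, h). (\<lambda>w. if w \<in> H then h w else l w))"
  have bij: "bij_betw mg (PiE (I - H) A \<times> PiE H A) (PiE I A)"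
  proof (rule bij_betw_imageI)
    show "inj_on mg (PiE (I - H) A \<times> PiE H A)"
    proof (rule inj_onI)
      fix p1 p2 assume m1: "p1 \<in> PiE (I - H) A \<times> PiE H A" and m2: "p2 \<in> PiE (I - H) A \<times> PiE H A"
        and e: "mg p1 = mg p2"
      obtain l1 h1 where p1: "p1 = (l1, h1)" by (cases p1)
      obtain l2 h2 where p2: "p2 = (l2, h2)" by (cases p2)
      have e': "(if w \<in> H then h1 w else l1 w) = (if w \<in> H then h2 w else l2 w)" for w
        using fun_cong[OF e, of w] unfolding mg_def p1 p2 by simp
      have l: "l1 \<in> extensional (I - H)" "l2 \<in> extensional (I - H)" "h1 \<in> extensional H" "h2 \<in> extensional H"
        using m1 m2 unfolding p1 p2 by (auto simp: PiE_def)
      have "l1 w = l2 w" for w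
      proof (cases "w \<in> H")
        case True
        then show ?thesis using l(1,2) by (simp add: extensional_def)
      next
        case False
        then show ?thesis using e'[of w] by simp
      qed
      moreover have "h1 w = h2 w" for w
      proof (cases "w \<in> H")
        case True
        then show ?thesis using e'[of w] by simp
      next
        case False
        then show ?thesis using l(3,4) by (simp add: extensional_def)
      qed
      ultimately show "p1 = p2" unfolding p1 p2 by auto
    qed
    show "mg ` (PiE (I - H) A \<times> PiE H A) = PiE I A"
    proof
      show "mg ` (PiE (I - H) A \<times> PiE H A) \<subseteq> PiE I A"
      proof
        fix z assume "z \<in> mg ` (PiE (I - H) A \<times> PiE H A)"
        then obtain l h where l: "l \<in> PiE (I - H) A" and h: "h \<in> PiE H A" and z: "z = mg (l, h)" by blast
        have "z w \<in> A w" if "w \<in> I" for w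
          using l h that unfolding z mg_def by (cases "w \<in> H") (simp_all add: PiE_iff)
        moreover have "z w = undefined" if "w \<notin> I" for w
        proof -
          have "w \<notin> H" "w \<notin> I - H" using that assms by auto
          thus ?thesis using l unfolding z mg_def by (simp add: PiE_def extensional_def)
        qed
        ultimately show "z \<in> PiE I A" by (simp add: PiE_iff extensional_def)
      qed
      show "PiE I A \<subseteq> mg ` (PiE (I - H) A \<times> PiE H A)"
      proof
        fix z assume z: "z \<in> PiE I A"
        have "z = mg (restrict z (I - H), restrict z H)"
        proof
          fix w show "z w = mg (restrict z (I - H), restrict z H) w"
          proof (cases "w \<in> I")
            case True
            then show ?thesis unfolding mg_def by simp
          next
            case False
            then have "w \<notin> H" using assms by auto
            then show ?thesis using z False unfolding mg_def by (simp add: PiE_def extensional_def)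
          qed
        qed
        moreover have "(restrict z (I - H), restrict z H) \<in> PiE (I - H) A \<times> PiE H A"
          using z assms by (auto simp: PiE_iff)
        ultimately show "z \<in> mg ` (PiE (I - H) A \<times> PiE H A)" by blast
      qed
    qed
  qed
  have "(\<Sum>z\<in>PiE I A. f z) = (\<Sum>p\<in>PiE (I - H) A \<times> PiE H A. f (mg p))"
    using sum.reindex_bij_betw[OF bij, of f] by simp
  also have "\<dots> = (\<Sum>l\<in>PiE (I - H) A. \<Sum>h\<in>PiE H A. f (\<lambda>w. if w \<in> H then h w else l w))"
    unfolding sum.cartesian_product mg_def by (intro sum.cong) auto
  finally show ?thesis .
qed

locale bn =
  fixes Vs :: "'v::linorder set" and pa :: "'v \<Rightarrow> 'v set" and A :: "'v \<Rightarrow> 'a set"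
    and K :: "'v \<Rightarrow> ('v \<Rightarrow> 'a) \<Rightarrow> 'a \<Rightarrow> real" and X :: 'v
  assumes net: "bayes_net Vs pa A K X"
begin

lemma fVs: "finite Vs" and XV: "X \<in> Vs" and paX: "pa X = {}"
  and paV: "v \<in> Vs \<Longrightarrow> pa v \<subseteq> Vs" and paL: "v \<in> Vs \<Longrightarrow> u \<in> pa v \<Longrightarrow> u < v"
  and fAv: "v \<in> Vs \<Longrightarrow> finite (A v)" and nAv: "v \<in> Vs \<Longrightarrow> A v \<noteq> {}"
  and K0: "v \<in> Vs \<Longrightarrow> v \<noteq> X \<Longrightarrow> y \<in> PiE (pa v) A \<Longrightarrow> b \<in> A v \<Longrightarrow> 0 \<le> K v y b"
  and K1: "v \<in> Vs \<Longrightarrow> v \<noteq> X \<Longrightarrow> y \<in> PiE (pa v) A \<Longrightarrow> (\<Sum>b\<in>A v. K v y b) = 1"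
  using net unfolding bayes_net_def by blast+

lemma finPiE: "S \<subseteq> Vs \<Longrightarrow> finite (PiE S A)"
  using fVs fAv by (intro finite_PiE) (auto intro: finite_subset)

lemma nePiE: "S \<subseteq> Vs \<Longrightarrow> PiE S A \<noteq> {}"
  using nAv by (auto simp: PiE_eq_empty_iff)

lemma restr_in: "z \<in> PiE I A \<Longrightarrow> S \<subseteq> I \<Longrightarrow> restrict z S \<in> PiE S A"
  by (auto simp: PiE_iff)

definition PI where "PI z = (\<Prod>v\<in>Vs-{X}. K v (restrict z (pa v)) (z v))"

lemma PI_nonneg: "z \<in> PiE Vs A \<Longrightarrow> 0 \<le> PI z"
proof -
  assume z: "z \<in> PiE Vs A"
  show ?thesis unfolding PI_def
  proof (intro prod_nonneg)
    fix v assume v: "v \<in> Vs - {X}"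
    show "0 \<le> K v (restrict z (pa v)) (z v)"
      using K0[of v "restrict z (pa v)" "z v"] v restr_in[OF z paV[of v]] z by (auto simp: PiE_iff)
  qed
qed

lemma sumout:
  assumes "finite H" "H \<subseteq> Vs - {X}"
  shows "\<forall>g. (\<forall>u\<in>Vs - H. g u \<in> A u) \<longrightarrow>
     (\<Sum>h\<in>PiE H A. \<Prod>v\<in>H. K v (restrict (\<lambda>w. if w \<in> H then h w else g w) (pa v)) (h v)) = 1"
  using assms
proof (induction H rule: finite_linorder_max_induct)
  case empty then show ?case by simp
next
  case (insert m H')
  show ?case
  proof (intro allI impI)
    fix g assume g: "\<forall>u\<in>Vs - insert m H'. g u \<in> A u"
    have mH: "m \<notin> H'" using insert.hyps by auto
    have mV: "m \<in> Vs" "m \<noteq> X" using insert.prems by auto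
    obtain a0 where a0: "a0 \<in> A m" using nAv[OF mV(1)] by blast
    define g' where "g' = g(m := a0)"
    have g': "\<forall>u\<in>Vs - H'. g' u \<in> A u" using g a0 by (auto simp: g'_def)
    define P' where "P' h' = (\<Prod>v\<in>H'. K v (restrict (\<lambda>w. if w \<in> H' then h' w else g' w) (pa v)) (h' v))" for h'
    have "H' \<subseteq> Vs - {X}" using insert.prems by auto
    hence IH: "(\<Sum>h'\<in>PiE H' A. P' h') = 1" using insert.IH g' unfolding P'_def by blast
    have tm: "(\<Prod>v\<in>insert m H'. K v (restrict (\<lambda>w. if w \<in> insert m H' then (h'(m := a)) w else g w) (pa v)) ((h'(m := a)) v))
        = P' h' * K m (restrict (\<lambda>w. if w \<in> H' then h' w else g' w) (pa m)) a" for h' a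
    proof -
      have r: "restrict (\<lambda>w. if w \<in> insert m H' then (h'(m := a)) w else g w) (pa v)
          = restrict (\<lambda>w. if w \<in> H' then h' w else g' w) (pa v)" if "v \<in> insert m H'" for v
      proof (rule restrict_ext)
        fix w assume w: "w \<in> pa v"
        have "v \<in> Vs" using that insert.prems by auto
        hence "w < v" using paL w by blast
        hence "w \<noteq> m" using that insert.hyps by auto
        thus "(if w \<in> insert m H' then (h'(m := a)) w else g w) = (if w \<in> H' then h' w else g' w)"
          by (simp add: g'_def)
      qed
      have "(\<Prod>v\<in>insert m H'. K v (restrict (\<lambda>w. if w \<in> insert m H' then (h'(m := a)) w else g w) (pa v)) ((h'(m := a)) v))
          = (\<Prod>v\<in>insert m H'. K v (restrict (\<lambda>w. if w \<in> H' then h' w else g' w) (pa v)) ((h'(m := a)) v))"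
        using r by (intro prod.cong refl) simp
      also have "\<dots> = K m (restrict (\<lambda>w. if w \<in> H' then h' w else g' w) (pa m)) a * P' h'"
      proof -
        have "(\<Prod>v\<in>H'. K v (restrict (\<lambda>w. if w \<in> H' then h' w else g' w) (pa v)) ((h'(m := a)) v)) = P' h'"
          unfolding P'_def using mH by (intro prod.cong refl) auto
        thus ?thesis using mH insert.hyps by (simp add: prod.insert)
      qed
      finally show ?thesis by simp
    qed
    have inner: "(\<Sum>a\<in>A m. K m (restrict (\<lambda>w. if w \<in> H' then h' w else g' w) (pa m)) a) = 1"
      if h': "h' \<in> PiE H' A" for h'
    proof (rule K1[OF mV])
      show "restrict (\<lambda>w. if w \<in> H' then h' w else g' w) (pa m) \<in> PiE (pa m) A"
        using h' g' paV[OF mV(1)] by (auto simp: PiE_iff)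
    qed
    have "(\<Sum>h\<in>PiE (insert m H') A. \<Prod>v\<in>insert m H'. K v (restrict (\<lambda>w. if w \<in> insert m H' then h w else g w) (pa v)) (h v))
       = (\<Sum>a\<in>A m. \<Sum>h'\<in>PiE H' A. P' h' * K m (restrict (\<lambda>w. if w \<in> H' then h' w else g' w) (pa m)) a)"
      unfolding sum_PiE_insert[OF mH] tm ..
    also have "\<dots> = (\<Sum>h'\<in>PiE H' A. P' h' * (\<Sum>a\<in>A m. K m (restrict (\<lambda>w. if w \<in> H' then h' w else g' w) (pa m)) a))"
      by (subst sum.swap) (simp add: sum_distrib_left)
    also have "\<dots> = (\<Sum>h'\<in>PiE H' A. P' h')" using inner by simp
    finally show "(\<Sum>h\<in>PiE (insert m H') A. \<Prod>v\<in>insert m H'. K v (restrict (\<lambda>w. if w \<in> insert m H' then h w else g w) (pa v)) (h v)) = 1"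
      using IH by simp
  qed
qed

lemma reduce:
  assumes H: "H \<subseteq> Vs - {X}" and low: "\<forall>v\<in>Vs - H - {X}. pa v \<inter> H = {}"
  shows "(\<Sum>z\<in>PiE Vs A. PI z * G (restrict z (Vs - H)))
       = (\<Sum>l\<in>PiE (Vs - H) A. (\<Prod>v\<in>Vs - H - {X}. K v (restrict l (pa v)) (l v)) * G l)"
proof -
  have fH: "finite H" using H fVs finite_subset by blast
  have HV: "H \<subseteq> Vs" using H by auto
  have step: "(\<Sum>h\<in>PiE H A. PI (\<lambda>w. if w \<in> H then h w else l w) * G (restrict (\<lambda>w. if w \<in> H then h w else l w) (Vs - H)))
      = (\<Prod>v\<in>Vs - H - {X}. K v (restrict l (pa v)) (l v)) * G l" if l: "l \<in> PiE (Vs - H) A" for l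
  proof -
    have rl: "restrict (\<lambda>w. if w \<in> H then h w else l w) (Vs - H) = l" for h
    proof
      fix w show "restrict (\<lambda>w. if w \<in> H then h w else l w) (Vs - H) w = l w"
        using l by (cases "w \<in> Vs - H") (auto simp: PiE_def extensional_def)
    qed
    have split: "Vs - {X} = (Vs - H - {X}) \<union> H" using H by auto
    have PIe: "PI (\<lambda>w. if w \<in> H then h w else l w)
        = (\<Prod>v\<in>Vs - H - {X}. K v (restrict l (pa v)) (l v))
          * (\<Prod>v\<in>H. K v (restrict (\<lambda>w. if w \<in> H then h w else l w) (pa v)) (h v))" for h
    proof -
      have "PI (\<lambda>w. if w \<in> H then h w else l w)
        = (\<Prod>v\<in>Vs - H - {X}. K v (restrict (\<lambda>w. if w \<in> H then h w else l w) (pa v)) (if v \<in> H then h v else l v))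
          * (\<Prod>v\<in>H. K v (restrict (\<lambda>w. if w \<in> H then h w else l w) (pa v)) (if v \<in> H then h v else l v))"
        unfolding PI_def split using fVs fH by (intro prod.union_disjoint) auto
      moreover have "(\<Prod>v\<in>Vs - H - {X}. K v (restrict (\<lambda>w. if w \<in> H then h w else l w) (pa v)) (if v \<in> H then h v else l v))
          = (\<Prod>v\<in>Vs - H - {X}. K v (restrict l (pa v)) (l v))"
      proof (intro prod.cong refl)
        fix v assume v: "v \<in> Vs - H - {X}"
        have "restrict (\<lambda>w. if w \<in> H then h w else l w) (pa v) = restrict l (pa v)"
        proof (rule restrict_ext)
          fix w assume "w \<in> pa v" thus "(if w \<in> H then h w else l w) = l w" using low v by auto
        qed
        thus "K v (restrict (\<lambda>w. if w \<in> H then h w else l w) (pa v)) (if v \<in> H then h v else l v) = K v (restrict l (pa v)) (l v)"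
          using v by simp
      qed
      moreover have "(\<Prod>v\<in>H. K v (restrict (\<lambda>w. if w \<in> H then h w else l w) (pa v)) (if v \<in> H then h v else l v))
          = (\<Prod>v\<in>H. K v (restrict (\<lambda>w. if w \<in> H then h w else l w) (pa v)) (h v))"
        by (intro prod.cong refl) simp
      ultimately show ?thesis by simp
    qed
    have lA: "\<forall>u\<in>Vs - H. l u \<in> A u" using l by (simp add: PiE_iff)
    have so: "(\<Sum>h\<in>PiE H A. \<Prod>v\<in>H. K v (restrict (\<lambda>w. if w \<in> H then h w else l w) (pa v)) (h v)) = 1"
      using sumout[OF fH H] lA by blast
    have "(\<Sum>h\<in>PiE H A. PI (\<lambda>w. if w \<in> H then h w else l w) * G (restrict (\<lambda>w. if w \<in> H then h w else l w) (Vs - H)))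
       = (\<Sum>h\<in>PiE H A. ((\<Prod>v\<in>Vs - H - {X}. K v (restrict l (pa v)) (l v)) * G l)
            * (\<Prod>v\<in>H. K v (restrict (\<lambda>w. if w \<in> H then h w else l w) (pa v)) (h v)))"
      unfolding rl PIe by (simp add: mult_ac)
    also have "\<dots> = (\<Prod>v\<in>Vs - H - {X}. K v (restrict l (pa v)) (l v)) * G l"
      unfolding sum_distrib_left[symmetric] so by simp
    finally show ?thesis .
  qed
  show ?thesis unfolding sum_split_PiE[OF HV, of _ A] using step by simp
qed


lemma nk_eq: "net_kernel Vs pa A K X S x y = (\<Sum>z\<in>PiE Vs A. if z X = x \<and> restrict z S = y then PI z else 0)"
  unfolding net_kernel_def PI_def using finPiE[of Vs] by (simp add: sum.inter_filter)

lemma nk_nonneg: "0 \<le> net_kernel Vs pa A K X S x y"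
  unfolding nk_eq by (intro sum_nonneg) (auto intro: PI_nonneg)

lemma delta_restr:
  assumes "z \<in> PiE Vs A" "T \<subseteq> Vs"
  shows "(\<Sum>y'\<in>PiE T A. if restrict z T = y' then f y' else 0) = f (restrict z T)"
  using finPiE[OF assms(2)] restr_in[OF assms] by simp

lemma nk_stoch:
  assumes S: "S \<subseteq> Vs" and x: "x \<in> A X"
  shows "(\<Sum>y\<in>PiE S A. net_kernel Vs pa A K X S x y) = 1"
proof -
  have "(\<Sum>y\<in>PiE S A. net_kernel Vs pa A K X S x y)
      = (\<Sum>z\<in>PiE Vs A. \<Sum>y\<in>PiE S A. if z X = x \<and> restrict z S = y then PI z else 0)"
    unfolding nk_eq by (rule sum.swap)
  also have "\<dots> = (\<Sum>z\<in>PiE Vs A. PI z * (\<lambda>l. if l X = x then 1 else 0) (restrict z (Vs - (Vs - {X}))))"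
  proof (intro sum.cong refl)
    fix z assume z: "z \<in> PiE Vs A"
    have "(\<Sum>y\<in>PiE S A. if z X = x \<and> restrict z S = y then PI z else 0)
        = (\<Sum>y\<in>PiE S A. if restrict z S = y then (if z X = x then PI z else 0) else 0)"
      by (intro sum.cong refl) auto
    also have "\<dots> = (if z X = x then PI z else 0)" by (rule delta_restr[OF z S])
    finally show "(\<Sum>y\<in>PiE S A. if z X = x \<and> restrict z S = y then PI z else 0)
        = PI z * (\<lambda>l. if l X = x then 1 else 0) (restrict z (Vs - (Vs - {X})))"
      using XV by simp
  qed
  also have "\<dots> = (\<Sum>l\<in>PiE (Vs - (Vs - {X})) A. (\<Prod>v\<in>Vs - (Vs - {X}) - {X}. K v (restrict l (pa v)) (l v)) * (\<lambda>l. if l X = x then 1 else 0) l)"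
    by (rule reduce) auto
  also have "\<dots> = (\<Sum>l\<in>PiE {X} A. if l X = x then 1 else 0)"
  proof -
    have "Vs - (Vs - {X}) = {X}" using XV by auto
    thus ?thesis by simp
  qed
  also have "\<dots> = 1"
    using sum_PiE_insert[where x=X and S="{}" and T=A and g="\<lambda>l. if l X = x then 1 else (0::real)"] fAv[OF XV] x by simp
  finally show ?thesis .
qed

lemma nk_marg:
  assumes VT: "V \<subseteq> T" and T: "T \<subseteq> Vs"
  shows "(\<Sum>y'\<in>PiE T A. if restrict y' V = b then net_kernel Vs pa A K X T x y' else 0)
       = net_kernel Vs pa A K X V x b"
proof -
  have "(\<Sum>y'\<in>PiE T A. if restrict y' V = b then net_kernel Vs pa A K X T x y' else 0)
     = (\<Sum>y'\<in>PiE T A. \<Sum>z\<in>PiE Vs A. if restrict z T = y' then (if z X = x \<and> restrict y' V = b then PI z else 0) else 0)"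
  proof (intro sum.cong refl)
    fix y' show "(if restrict y' V = b then net_kernel Vs pa A K X T x y' else 0) =
      (\<Sum>z\<in>PiE Vs A. if restrict z T = y' then (if z X = x \<and> restrict y' V = b then PI z else 0) else 0)"
      unfolding nk_eq by (cases "restrict y' V = b") (auto intro!: sum.cong sum.neutral)
  qed
  also have "\<dots> = (\<Sum>z\<in>PiE Vs A. \<Sum>y'\<in>PiE T A. if restrict z T = y' then (if z X = x \<and> restrict y' V = b then PI z else 0) else 0)"
    by (rule sum.swap)
  also have "\<dots> = (\<Sum>z\<in>PiE Vs A. if z X = x \<and> restrict z V = b then PI z else 0)"
  proof (intro sum.cong refl)
    fix z assume z: "z \<in> PiE Vs A"
    have "T \<inter> V = V" using VT by auto
    thus "(\<Sum>y'\<in>PiE T A. if restrict z T = y' then (if z X = x \<and> restrict y' V = b then PI z else 0) else 0)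
        = (if z X = x \<and> restrict z V = b then PI z else 0)"
      using delta_restr[OF z T, of "\<lambda>y'. if z X = x \<and> restrict y' V = b then PI z else 0"] by simp
  qed
  finally show ?thesis unfolding nk_eq .
qed


lemma markov:
  assumes W: "W \<in> Vs" "W \<noteq> X" and V: "V \<subseteq> Vs" "\<forall>v\<in>V. v < W" and w: "w \<in> A W"
  shows "(\<Sum>z\<in>PiE Vs A. if z X = x \<and> restrict z V = b \<and> z W = w then PI z else 0)
       = (\<Sum>z\<in>PiE Vs A. if z X = x \<and> restrict z V = b then PI z * K W (restrict z (pa W)) w else 0)"
proof -
  define H where "H = {v\<in>Vs. W < v} - {X}"
  define S where "S = Vs - H"
  have H: "H \<subseteq> Vs - {X}" unfolding H_def by auto
  have low: "\<forall>v\<in>Vs - H - {X}. pa v \<inter> H = {}"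
  proof (intro ballI)
    fix v assume v: "v \<in> Vs - H - {X}"
    hence vW: "v \<le> W" unfolding H_def by auto
    show "pa v \<inter> H = {}"
    proof (rule ccontr)
      assume "pa v \<inter> H \<noteq> {}"
      then obtain u where "u \<in> pa v" "u \<in> H" by blast
      hence "u < v" "W < u" using paL v unfolding H_def by auto
      thus False using vW by simp
    qed
  qed
  have XS: "X \<in> S" and WS: "W \<in> S" and VS: "V \<subseteq> S"
    using XV W V unfolding S_def H_def by auto
  have pWS: "pa W \<subseteq> S"
  proof
    fix u assume u: "u \<in> pa W"
    hence "u < W" "u \<in> Vs" using paL[OF W(1)] paV[OF W(1)] by auto
    thus "u \<in> S" unfolding S_def H_def by auto
  qed
  define G1 where "G1 l = (if l X = x \<and> restrict l V = b \<and> l W = w then 1::real else 0)" for l :: "'v \<Rightarrow> 'a"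
  define G2 where "G2 l = (if l X = x \<and> restrict l V = b then K W (restrict l (pa W)) w else 0)" for l :: "'v \<Rightarrow> 'a"
  have SV: "S \<inter> V = V" "S \<inter> pa W = pa W" using VS pWS by auto
  have L: "(\<Sum>z\<in>PiE Vs A. if z X = x \<and> restrict z V = b \<and> z W = w then PI z else 0)
      = (\<Sum>z\<in>PiE Vs A. PI z * G1 (restrict z (Vs - H)))"
    unfolding S_def[symmetric] G1_def using XS WS SV by (intro sum.cong refl) simp
  have R: "(\<Sum>z\<in>PiE Vs A. if z X = x \<and> restrict z V = b then PI z * K W (restrict z (pa W)) w else 0)
      = (\<Sum>z\<in>PiE Vs A. PI z * G2 (restrict z (Vs - H)))"
    unfolding S_def[symmetric] G2_def using XS WS SV by (intro sum.cong refl) simp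
  define PS where "PS l = (\<Prod>v\<in>S - {X}. K v (restrict l (pa v)) (l v))" for l :: "'v \<Rightarrow> 'a"
  have red1: "(\<Sum>z\<in>PiE Vs A. PI z * G1 (restrict z (Vs - H))) = (\<Sum>l\<in>PiE S A. PS l * G1 l)"
    unfolding PS_def S_def by (rule reduce[OF H low])
  have red2: "(\<Sum>z\<in>PiE Vs A. PI z * G2 (restrict z (Vs - H))) = (\<Sum>l\<in>PiE S A. PS l * G2 l)"
    unfolding PS_def S_def by (rule reduce[OF H low])
  define S' where "S' = S - {W}"
  have SS: "S = insert W S'" "W \<notin> S'" using WS unfolding S'_def by auto
  have fS': "finite S'" unfolding S'_def S_def using fVs by simp
  have S'lt: "v < W" if "v \<in> S'" "v \<noteq> X" for v
    using that unfolding S'_def S_def H_def by auto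
  define P' where "P' g = (\<Prod>v\<in>S' - {X}. K v (restrict g (pa v)) (g v))" for g :: "'v \<Rightarrow> 'a"
  define kw where "kw g a = K W (restrict g (pa W)) a" for g :: "'v \<Rightarrow> 'a" and a
  define c where "c g = (g X = x \<and> restrict g V = b)" for g :: "'v \<Rightarrow> 'a"
  have PSe: "PS (g(W := a)) = kw g a * P' g" for g a
  proof -
    have SX: "S - {X} = insert W (S' - {X})" "W \<notin> S' - {X}" using SS W by auto
    have "(\<Prod>v\<in>S' - {X}. K v (restrict (g(W := a)) (pa v)) ((g(W := a)) v)) = P' g"
      unfolding P'_def
    proof (intro prod.cong refl)
      fix v assume v: "v \<in> S' - {X}"
      hence vW: "v < W" using S'lt by auto
      have vV: "v \<in> Vs" using v unfolding S'_def S_def by auto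
      have "restrict (g(W := a)) (pa v) = restrict g (pa v)"
      proof (rule restrict_ext)
        fix u assume "u \<in> pa v" hence "u < v" using paL vV by blast
        thus "(g(W := a)) u = g u" using vW by auto
      qed
      moreover have "v \<noteq> W" using vW by simp
      ultimately show "K v (restrict (g(W := a)) (pa v)) ((g(W := a)) v) = K v (restrict g (pa v)) (g v)"
        by simp
    qed
    moreover have "restrict (g(W := a)) (pa W) = restrict g (pa W)"
      using paL[OF W(1)] by (intro restrict_ext) auto
    ultimately show ?thesis unfolding PS_def SX(1) kw_def using SX(2) fS' by (simp add: prod.insert)
  qed
  have ce: "(g(W := a)) X = g X" "restrict (g(W := a)) V = restrict g V" "restrict (g(W := a)) (pa W) = restrict g (pa W)" for g a
  proof -
    have nW: "W \<notin> pa W" "W \<notin> V" using paL[OF W(1)] V(2) by blast+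
    show "(g(W := a)) X = g X" using W(2) by simp
    show "restrict (g(W := a)) V = restrict g V" using nW by (intro restrict_ext) auto
    show "restrict (g(W := a)) (pa W) = restrict g (pa W)" using nW by (intro restrict_ext) auto
  qed
  have kw1: "(\<Sum>a\<in>A W. kw g a) = 1" if g: "g \<in> PiE S' A" for g
    unfolding kw_def
  proof (rule K1[OF W])
    have "pa W \<subseteq> S'" using pWS SS paL[OF W(1)] unfolding S'_def by auto
    thus "restrict g (pa W) \<in> PiE (pa W) A" using restr_in[OF g] by blast
  qed
  have "(\<Sum>l\<in>PiE S A. PS l * G1 l) = (\<Sum>a\<in>A W. \<Sum>g\<in>PiE S' A. PS (g(W := a)) * G1 (g(W := a)))"
    unfolding SS(1) by (rule sum_PiE_insert[OF SS(2)])
  also have "\<dots> = (\<Sum>a\<in>A W. \<Sum>g\<in>PiE S' A. if c g \<and> a = w then kw g a * P' g else 0)"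
    unfolding PSe G1_def c_def ce by (intro sum.cong refl) auto
  also have "\<dots> = (\<Sum>g\<in>PiE S' A. \<Sum>a\<in>A W. if a = w then (if c g then kw g a * P' g else 0) else 0)"
    by (subst sum.swap) (intro sum.cong refl, auto)
  also have "\<dots> = (\<Sum>g\<in>PiE S' A. if c g then kw g w * P' g else 0)"
    using w fAv[OF W(1)] by simp
  finally have LL: "(\<Sum>l\<in>PiE S A. PS l * G1 l) = \<dots>" .
  have "(\<Sum>l\<in>PiE S A. PS l * G2 l) = (\<Sum>a\<in>A W. \<Sum>g\<in>PiE S' A. PS (g(W := a)) * G2 (g(W := a)))"
    unfolding SS(1) by (rule sum_PiE_insert[OF SS(2)])
  also have "\<dots> = (\<Sum>a\<in>A W. \<Sum>g\<in>PiE S' A. if c g then kw g a * (P' g * kw g w) else 0)"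
    unfolding PSe G2_def c_def ce kw_def by (intro sum.cong refl) auto
  also have "\<dots> = (\<Sum>g\<in>PiE S' A. if c g then (\<Sum>a\<in>A W. kw g a) * (P' g * kw g w) else 0)"
    by (subst sum.swap) (intro sum.cong refl, auto simp: sum_distrib_right)
  also have "\<dots> = (\<Sum>g\<in>PiE S' A. if c g then kw g w * P' g else 0)"
    using kw1 by (intro sum.cong refl) auto
  finally have RR: "(\<Sum>l\<in>PiE S A. PS l * G2 l) = \<dots>" .
  show ?thesis unfolding L R red1 red2 LL RR ..
qed

lemma netfact:
  assumes W: "W \<in> Vs" "W \<noteq> X" "W \<notin> V" and V: "V \<subseteq> Vs" "\<forall>v\<in>V. v < W"
    and y: "y \<in> PiE (V \<union> {W}) A"
  shows "net_kernel Vs pa A K X (V \<union> {W}) x y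
    = (\<Sum>y'\<in>PiE (V \<union> pa W) A. if restrict y' V = restrict y V
         then net_kernel Vs pa A K X (V \<union> pa W) x y' * K W (restrict y' (pa W)) (y W) else 0)"
proof -
  define T where "T = V \<union> pa W"
  have T: "T \<subseteq> Vs" unfolding T_def using V paV[OF W(1)] by auto
  have TV: "T \<inter> V = V" "T \<inter> pa W = pa W" unfolding T_def by auto
  have wA: "y W \<in> A W" using y by (auto simp: PiE_iff)
  have eqv: "(restrict z (V \<union> {W}) = y) \<longleftrightarrow> (restrict z V = restrict y V \<and> z W = y W)" for z
  proof
    assume "restrict z (V \<union> {W}) = y"
    moreover have "(V \<union> {W}) \<inter> V = V" by auto
    hence "restrict (restrict z (V \<union> {W})) V = restrict z V" by simp
    ultimately show "restrict z V = restrict y V \<and> z W = y W" by auto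
  next
    assume a: "restrict z V = restrict y V \<and> z W = y W"
    show "restrict z (V \<union> {W}) = y"
    proof
      fix u show "restrict z (V \<union> {W}) u = y u"
      proof (cases "u \<in> V")
        case True then show ?thesis using fun_cong[OF conjunct1[OF a], of u] by simp
      next
        case False
        then show ?thesis using a y by (cases "u = W") (auto simp: PiE_def extensional_def)
      qed
    qed
  qed
  have "(\<Sum>y'\<in>PiE T A. if restrict y' V = restrict y V
         then net_kernel Vs pa A K X T x y' * K W (restrict y' (pa W)) (y W) else 0)
      = (\<Sum>y'\<in>PiE T A. \<Sum>z\<in>PiE Vs A. if restrict z T = y' then (if z X = x \<and> restrict y' V = restrict y V
            then PI z * K W (restrict y' (pa W)) (y W) else 0) else 0)"
  proof (intro sum.cong refl)
    fix y' show "(if restrict y' V = restrict y V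
         then net_kernel Vs pa A K X T x y' * K W (restrict y' (pa W)) (y W) else 0) =
       (\<Sum>z\<in>PiE Vs A. if restrict z T = y' then (if z X = x \<and> restrict y' V = restrict y V
            then PI z * K W (restrict y' (pa W)) (y W) else 0) else 0)"
      unfolding nk_eq by (cases "restrict y' V = restrict y V") (auto simp: sum_distrib_right intro!: sum.cong sum.neutral)
  qed
  also have "\<dots> = (\<Sum>z\<in>PiE Vs A. \<Sum>y'\<in>PiE T A. if restrict z T = y' then (if z X = x \<and> restrict y' V = restrict y V
            then PI z * K W (restrict y' (pa W)) (y W) else 0) else 0)"
    by (rule sum.swap)
  also have "\<dots> = (\<Sum>z\<in>PiE Vs A. if z X = x \<and> restrict z V = restrict y V then PI z * K W (restrict z (pa W)) (y W) else 0)"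
  proof (intro sum.cong refl)
    fix z assume z: "z \<in> PiE Vs A"
    show "(\<Sum>y'\<in>PiE T A. if restrict z T = y' then (if z X = x \<and> restrict y' V = restrict y V
            then PI z * K W (restrict y' (pa W)) (y W) else 0) else 0)
        = (if z X = x \<and> restrict z V = restrict y V then PI z * K W (restrict z (pa W)) (y W) else 0)"
      using delta_restr[OF z T, of "\<lambda>y'. if z X = x \<and> restrict y' V = restrict y V
            then PI z * K W (restrict y' (pa W)) (y W) else 0"] TV by simp
  qed
  also have "\<dots> = (\<Sum>z\<in>PiE Vs A. if z X = x \<and> restrict z V = restrict y V \<and> z W = y W then PI z else 0)"
    by (rule markov[OF W(1,2) V wA, symmetric])
  also have "\<dots> = net_kernel Vs pa A K X (V \<union> {W}) x y"
    unfolding nk_eq eqv by (rule refl)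
  finally show ?thesis unfolding T_def by simp
qed


definition qk where "qk S p u y = (\<Sum>x\<in>A X. p u x * net_kernel Vs pa A K X S x y)"

lemma qk_nonneg: "\<forall>u\<in>SU. \<forall>x\<in>A X. 0 \<le> p u x \<Longrightarrow> u \<in> SU \<Longrightarrow> 0 \<le> qk S p u y"
  unfolding qk_def by (intro sum_nonneg) (auto intro: mult_nonneg_nonneg nk_nonneg)

lemma qk_marg:
  assumes "V \<subseteq> T" "T \<subseteq> Vs"
  shows "(\<Sum>y\<in>{y\<in>PiE T A. restrict y V = b}. qk T p u y) = qk V p u b"
proof -
  have "(\<Sum>y\<in>{y\<in>PiE T A. restrict y V = b}. qk T p u y)
      = (\<Sum>y\<in>PiE T A. if restrict y V = b then qk T p u y else 0)"
    using finPiE[OF assms(2)] by (simp add: sum.inter_filter)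
  also have "\<dots> = (\<Sum>y\<in>PiE T A. \<Sum>x\<in>A X. p u x * (if restrict y V = b then net_kernel Vs pa A K X T x y else 0))"
    unfolding qk_def by (intro sum.cong refl) auto
  also have "\<dots> = (\<Sum>x\<in>A X. p u x * (\<Sum>y\<in>PiE T A. if restrict y V = b then net_kernel Vs pa A K X T x y else 0))"
    by (subst sum.swap) (simp add: sum_distrib_left)
  also have "\<dots> = qk V p u b" unfolding qk_def nk_marg[OF assms] ..
  finally show ?thesis .
qed

lemma qk_total:
  assumes pm: "is_pmf2 SU (A X) p" and S: "S \<subseteq> Vs"
  shows "(\<Sum>u\<in>SU. \<Sum>y\<in>PiE S A. qk S p u y) = 1"
proof -
  have "(\<Sum>u\<in>SU. \<Sum>y\<in>PiE S A. qk S p u y) = (\<Sum>u\<in>SU. \<Sum>x\<in>A X. p u x * (\<Sum>y\<in>PiE S A. net_kernel Vs pa A K X S x y))"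
    unfolding qk_def by (intro sum.cong refl) (subst sum.swap, simp add: sum_distrib_left)
  also have "\<dots> = (\<Sum>u\<in>SU. \<Sum>x\<in>A X. p u x)" using nk_stoch[OF S] by simp
  also have "\<dots> = 1" using pm unfolding is_pmf2_def by simp
  finally show ?thesis .
qed

lemma chan_net: "S \<subseteq> Vs \<Longrightarrow> chan (A X) (PiE S A) (net_kernel Vs pa A K X S)"
  unfolding chan_def using fAv[OF XV] nAv[OF XV] finPiE nk_nonneg nk_stoch by auto

lemma chan_node: "W \<in> Vs \<Longrightarrow> W \<noteq> X \<Longrightarrow> chan (PiE (pa W) A) (A W) (K W)"
  unfolding chan_def using finPiE[OF paV] nePiE[OF paV] fAv K0 K1 by auto

lemma cmaj_node: "W \<in> Vs \<Longrightarrow> W \<noteq> X \<Longrightarrow> cmaj (F_I (PiE (pa W) A) (A W) (K W))"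
  unfolding cmaj_def using chan.FI_bounds[OF chan_node] by blast

lemma cmaj_net: "S \<subseteq> Vs \<Longrightarrow> cmaj (net_F Vs pa A K X S)"
  unfolding cmaj_def net_F_def using chan.FI_bounds[OF chan_net] by blast

lemma mono_mi:
  assumes VT: "V \<subseteq> T" and T: "T \<subseteq> Vs" and pm: "is_pmf2 SU (A X) p"
  shows "mutual_info SU (PiE V A) (qk V p) \<le> mutual_info SU (PiE T A) (qk T p)"
proof -
  define D where "D y b = (if restrict y V = b then 1 else (0::real))" for y :: "'v \<Rightarrow> 'a" and b
  have V: "V \<subseteq> Vs" using VT T by auto
  have e: "qk V p u b = (\<Sum>y\<in>PiE T A. qk T p u y * D y b)" for u b
  proof -
    have "(\<Sum>y\<in>PiE T A. qk T p u y * D y b) = (\<Sum>y\<in>{y\<in>PiE T A. restrict y V = b}. qk T p u y)"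
      using finPiE[OF T] unfolding D_def by (simp add: sum.inter_filter if_distrib[of "\<lambda>z. _ * z"] cong: if_cong)
    thus ?thesis using qk_marg[OF VT T, where b=b and p=p and u=u] by linarith
  qed
  have fU: "finite SU" and p0: "\<forall>u\<in>SU. \<forall>x\<in>A X. 0 \<le> p u x" using pm unfolding is_pmf2_def by auto
  have "mutual_info SU (PiE V A) (\<lambda>u b. \<Sum>y\<in>PiE T A. qk T p u y * D y b) \<le> mutual_info SU (PiE T A) (qk T p)"
  proof (rule dpi)
    show "\<forall>a\<in>PiE T A. (\<Sum>b\<in>PiE V A. D a b) = 1"
      using finPiE[OF V] restr_in VT unfolding D_def by auto
  qed (use fU finPiE[OF T] finPiE[OF V] p0 qk_nonneg D_def in auto)
  thus ?thesis using e by presburger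
qed


lemma core:
  fixes SU :: "nat set"
  assumes W: "W \<in> Vs" "W \<noteq> X" "W \<notin> V" and V: "V \<subseteq> Vs" "\<forall>v\<in>V. v < W"
    and pm: "is_pmf2 SU (A X) p"
  shows "mutual_info SU (PiE (V \<union> {W}) A) (qk (V \<union> {W}) p)
     \<le> mutual_info SU (PiE V A) (qk V p)
       + node_F_c pa A K W (mutual_info SU (PiE (V \<union> pa W) A) (qk (V \<union> pa W) p) - mutual_info SU (PiE V A) (qk V p))"
proof -
  define T where "T = V \<union> pa W"
  define SB where "SB = PiE V A"
  define Y1 where "Y1 = PiE (V \<union> {W}) A"
  define Y2 where "Y2 = PiE T A"
  define SC where "SC = PiE (pa W) A"
  define q1 where "q1 = qk (V \<union> {W}) p"
  define q2 where "q2 = qk T p"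
  define qV where "qV = qk V p"
  define h where "h = node_F_c pa A K W"
  define F where "F = F_I SC (A W) (K W)"
  have hF: "h = concave_majorant F" unfolding h_def F_def SC_def node_F_c_def F_I_c_def ..
  interpret cm: cmaj F unfolding F_def SC_def by (rule cmaj_node[OF W(1,2)])
  interpret ch: chan SC "A W" "K W" unfolding SC_def by (rule chan_node[OF W(1,2)])
  have TV: "T \<subseteq> Vs" "V \<subseteq> T" unfolding T_def using V paV[OF W(1)] by auto
  have Y1V: "V \<union> {W} \<subseteq> Vs" "V \<subseteq> V \<union> {W}" using V W by auto
  have fU: "finite SU" and p0: "\<forall>u\<in>SU. \<forall>x\<in>A X. 0 \<le> p u x" using pm unfolding is_pmf2_def by auto
  have fSB: "finite SB" "SB \<noteq> {}" unfolding SB_def using finPiE[OF V(1)] nePiE[OF V(1)] by auto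
  have fY1: "finite Y1" unfolding Y1_def using finPiE[OF Y1V(1)] .
  have fY2: "finite Y2" unfolding Y2_def using finPiE[OF TV(1)] .
  have fSC: "finite SC" unfolding SC_def using finPiE[OF paV[OF W(1)]] .
  define fib1 where "fib1 b = {y\<in>Y1. restrict y V = b}" for b
  define fib2 where "fib2 b = {y\<in>Y2. restrict y V = b}" for b
  have m1: "(\<lambda>u b. \<Sum>y\<in>fib1 b. q1 u y) = qV"
    unfolding fib1_def q1_def qV_def Y1_def by (intro ext) (rule qk_marg[OF Y1V(2) Y1V(1)])
  have m2: "(\<lambda>u b. \<Sum>y\<in>fib2 b. q2 u y) = qV"
    unfolding fib2_def q2_def qV_def Y2_def by (intro ext) (rule qk_marg[OF TV(2) TV(1)])
  define P where "P b = (\<Sum>u\<in>SU. qV u b)" for b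
  define I1 where "I1 b = mutual_info SU (fib1 b) (\<lambda>u y. q1 u y / P b)" for b
  define I2 where "I2 b = mutual_info SU (fib2 b) (\<lambda>u y. q2 u y / P b)" for b
  have pi1: "(\<lambda>y. restrict y V) ` Y1 \<subseteq> SB" unfolding Y1_def SB_def by (auto intro!: restr_in[OF _ Y1V(2)])
  have pi2: "(\<lambda>y. restrict y V) ` Y2 \<subseteq> SB" unfolding Y2_def SB_def by (auto intro!: restr_in[OF _ TV(2)])
  have q10: "\<forall>u\<in>SU. \<forall>y\<in>Y1. 0 \<le> q1 u y" unfolding q1_def by (auto intro!: qk_nonneg[OF p0])
  have q20: "\<forall>u\<in>SU. \<forall>y\<in>Y2. 0 \<le> q2 u y" unfolding q2_def by (auto intro!: qk_nonneg[OF p0])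
  have C1: "mutual_info SU Y1 q1 = mutual_info SU SB qV + (\<Sum>b\<in>SB. P b * I1 b)"
    using chain_rule[OF fU fY1 fSB(1) pi1 q10] unfolding I1_def P_def fib1_def[symmetric] m1
    by (simp add: m1[unfolded fun_eq_iff, rule_format])
  have C2: "mutual_info SU Y2 q2 = mutual_info SU SB qV + (\<Sum>b\<in>SB. P b * I2 b)"
    using chain_rule[OF fU fY2 fSB(1) pi2 q20] unfolding I2_def P_def fib2_def[symmetric] m2
    by (simp add: m2[unfolded fun_eq_iff, rule_format])
  have P0: "0 \<le> P b" for b unfolding P_def qV_def by (intro sum_nonneg) (auto intro!: qk_nonneg[OF p0])
  have P1: "(\<Sum>b\<in>SB. P b) = 1"
    unfolding P_def SB_def qV_def using qk_total[OF pm V(1)] by (subst sum.swap) simp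
  have sumfib2: "(\<Sum>u\<in>SU. \<Sum>y\<in>fib2 b. q2 u y) = P b" for b
    unfolding P_def using m2[unfolded fun_eq_iff] by simp
  have I20: "0 \<le> I2 b" for b
  proof (cases "P b = 0")
    case True thus ?thesis unfolding I2_def by (simp add: mi_zero)
  next
    case False
    have "is_pmf2 SU (fib2 b) (\<lambda>u y. q2 u y / P b)"
      unfolding is_pmf2_def using fU fY2 q20 P0[of b] False sumfib2[of b]
      by (auto simp: fib2_def sum_divide_distrib[symmetric])
    thus ?thesis unfolding I2_def by (rule mi_nonneg)
  qed
  have ptb: "P b * I1 b \<le> P b * h (I2 b)" if b: "b \<in> SB" for b
  proof (cases "P b = 0")
    case True thus ?thesis by simp
  next
    case False
    hence Pp: "P b > 0" using P0[of b] by simp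
    define D where "D y c = (if restrict y (pa W) = c then 1 else (0::real))" for y :: "'v \<Rightarrow> 'a" and c
    define rb where "rb u c = (\<Sum>y\<in>fib2 b. q2 u y / P b * D y c)" for u c
    have paT: "pa W \<subseteq> T" unfolding T_def by auto
    have Dst: "\<forall>y\<in>fib2 b. (\<Sum>c\<in>SC. D y c) = 1"
      unfolding D_def SC_def fib2_def Y2_def using finPiE[OF paV[OF W(1)]] restr_in paT by auto
    have ffib2: "finite (fib2 b)" unfolding fib2_def using fY2 by simp
    have dp: "mutual_info SU SC rb \<le> I2 b" unfolding rb_def I2_def
    proof (rule dpi[OF fU ffib2 fSC _ _ Dst])
      show "\<forall>u\<in>SU. \<forall>a\<in>fib2 b. 0 \<le> q2 u a / P b" using q20 Pp unfolding fib2_def by auto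
      show "\<forall>a\<in>fib2 b. \<forall>c\<in>SC. 0 \<le> D a c" unfolding D_def by auto
    qed
    have rbpmf: "is_pmf2 SU SC rb"
    proof -
      have "(\<Sum>u\<in>SU. \<Sum>c\<in>SC. rb u c) = (\<Sum>u\<in>SU. \<Sum>y\<in>fib2 b. q2 u y / P b * (\<Sum>c\<in>SC. D y c))"
        unfolding rb_def by (rule sum.cong[OF refl], subst sum.swap, simp add: sum_distrib_left)
      also have "\<dots> = (\<Sum>u\<in>SU. \<Sum>y\<in>fib2 b. q2 u y) / P b"
        using Dst by (simp add: sum_divide_distrib)
      also have "\<dots> = 1" using sumfib2[of b] Pp by simp
      finally show ?thesis unfolding is_pmf2_def rb_def D_def using fU fSC q20 Pp
        by (auto simp: fib2_def intro!: sum_nonneg)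
    qed
    have rb0: "0 \<le> mutual_info SU SC rb" by (rule mi_nonneg[OF rbpmf])
    have bA: "b \<in> PiE V A" using b unfolding SB_def .
    have bij: "bij_betw (\<lambda>w. b(W := w)) (A W) (fib1 b)"
    proof (rule bij_betwI')
      fix w1 w2 show "(b(W := w1) = b(W := w2)) = (w1 = w2)" by (metis fun_upd_same fun_upd_upd)
    next
      fix w assume w: "w \<in> A W"
      have "b(W := w) \<in> PiE (insert W V) A" by (rule PiE_fun_upd[OF w bA])
      moreover have "restrict (b(W := w)) V = b"
      proof
        fix u show "restrict (b(W := w)) V u = b u"
          using bA W(3) by (cases "u \<in> V") (auto simp: PiE_def extensional_def)
      qed
      ultimately show "b(W := w) \<in> fib1 b" unfolding fib1_def Y1_def by simp
    next
      fix y assume y: "y \<in> fib1 b"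
      hence yY: "y \<in> PiE (V \<union> {W}) A" and yb: "restrict y V = b" unfolding fib1_def Y1_def by auto
      have "y = b(W := y W)"
      proof
        fix u show "y u = (b(W := y W)) u"
        proof (cases "u \<in> V")
          case True then show ?thesis using fun_cong[OF yb, of u] W(3) by auto
        next
          case False then show ?thesis using yY bA by (cases "u = W") (auto simp: PiE_def extensional_def)
        qed
      qed
      moreover have "y W \<in> A W" using yY by (auto simp: PiE_iff)
      ultimately show "\<exists>w\<in>A W. y = b(W := w)" by blast
    qed
    have I1e: "I1 b = mutual_info SU (A W) (\<lambda>u w. q1 u (b(W := w)) / P b)"
      unfolding I1_def by (rule mi_reindex[OF bij])
    have qe: "q1 u (b(W := w)) / P b = (\<Sum>c\<in>SC. rb u c * K W c w)" if w: "w \<in> A W" for u w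
    proof -
      have yin: "b(W := w) \<in> PiE (V \<union> {W}) A" using PiE_fun_upd[OF w bA] by simp
      have rV: "restrict (b(W := w)) V = b"
      proof
        fix u show "restrict (b(W := w)) V u = b u"
          using bA W(3) by (cases "u \<in> V") (auto simp: PiE_def extensional_def)
      qed
      have "q1 u (b(W := w)) = (\<Sum>x\<in>A X. p u x * (\<Sum>y'\<in>Y2. if restrict y' V = b
          then net_kernel Vs pa A K X T x y' * K W (restrict y' (pa W)) w else 0))"
        unfolding q1_def qk_def netfact[OF W V yin] rV Y2_def T_def fun_upd_same ..
      also have "\<dots> = (\<Sum>y'\<in>Y2. if restrict y' V = b then q2 u y' * K W (restrict y' (pa W)) w else 0)"
        unfolding q2_def qk_def sum_distrib_left
      proof (subst sum.swap, intro sum.cong refl)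
        fix y' show "(\<Sum>x\<in>A X. p u x * (if restrict y' V = b then net_kernel Vs pa A K X T x y' * K W (restrict y' (pa W)) w else 0))
          = (if restrict y' V = b then (\<Sum>x\<in>A X. p u x * net_kernel Vs pa A K X T x y') * K W (restrict y' (pa W)) w else 0)"
          by (cases "restrict y' V = b") (simp_all add: sum_distrib_right sum_distrib_left mult_ac)
      qed
      also have "\<dots> = (\<Sum>y'\<in>fib2 b. q2 u y' * K W (restrict y' (pa W)) w)"
        unfolding fib2_def using fY2 by (simp add: sum.inter_filter)
      finally have A1: "q1 u (b(W := w)) = \<dots>" .
      have "(\<Sum>c\<in>SC. rb u c * K W c w) = (\<Sum>y\<in>fib2 b. q2 u y / P b * (\<Sum>c\<in>SC. D y c * K W c w))"
        unfolding rb_def sum_distrib_right sum_distrib_left by (subst sum.swap) (simp add: mult_ac)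
      also have "\<dots> = (\<Sum>y\<in>fib2 b. q2 u y / P b * K W (restrict y (pa W)) w)"
      proof (intro sum.cong refl)
        fix y assume "y \<in> fib2 b"
        hence "restrict y (pa W) \<in> SC" unfolding fib2_def Y2_def SC_def using restr_in paT by blast
        thus "q2 u y / P b * (\<Sum>c\<in>SC. D y c * K W c w) = q2 u y / P b * K W (restrict y (pa W)) w"
          unfolding D_def using fSC by (simp add: if_distrib[of "\<lambda>z. z * _"] cong: if_cong)
      qed
      finally show ?thesis unfolding A1 by (simp add: sum_divide_distrib)
    qed
    have "I1 b = mutual_info SU (A W) (\<lambda>u w. \<Sum>c\<in>SC. rb u c * K W c w)"
      unfolding I1e by (rule mi_cong) (simp add: qe)
    also have "\<dots> \<le> F (mutual_info SU SC rb)" unfolding F_def by (rule ch.FI_ge[OF rbpmf]) simp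
    also have "\<dots> \<le> h (mutual_info SU SC rb)" unfolding hF by (rule cm.cm_ge[OF rb0])
    also have "\<dots> \<le> h (I2 b)" unfolding hF by (rule cm.cm_mono[OF rb0 dp])
    finally show ?thesis using P0[of b] by (simp add: mult_left_mono)
  qed
  have "(\<Sum>b\<in>SB. P b * I1 b) \<le> (\<Sum>b\<in>SB. P b * h (I2 b))" using ptb by (intro sum_mono) auto
  also have "\<dots> \<le> h (\<Sum>b\<in>SB. P b * I2 b)"
    using concave_on_sum[OF fSB cm.cm_concave P1, of I2] P0 I20 unfolding hF by simp
  finally have main: "(\<Sum>b\<in>SB. P b * I1 b) \<le> h (\<Sum>b\<in>SB. P b * I2 b)" .
  show ?thesis
    using main C1 C2 unfolding h_def[symmetric] Y1_def Y2_def SB_def q1_def q2_def qV_def T_def by simp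
qed


lemma netF_mono:
  assumes VT: "V \<subseteq> T" and T: "T \<subseteq> Vs" and s: "s \<ge> 0"
  shows "net_F Vs pa A K X V s \<le> net_F Vs pa A K X T s"
proof -
  have V: "V \<subseteq> Vs" using VT T by auto
  interpret cV: chan "A X" "PiE V A" "net_kernel Vs pa A K X V" by (rule chan_net[OF V])
  interpret cT: chan "A X" "PiE T A" "net_kernel Vs pa A K X T" by (rule chan_net[OF T])
  show ?thesis unfolding net_F_def F_I_eq[of "A X" "PiE V A"]
  proof (rule cSup_least)
    show "FIset (A X) (PiE V A) (net_kernel Vs pa A K X V) s \<noteq> {}" using cV.FIset_0[OF s] by blast
    fix e assume "e \<in> FIset (A X) (PiE V A) (net_kernel Vs pa A K X V) s"
    then obtain SU :: "nat set" and p where e: "e = mutual_info SU (PiE V A) (qk V p)"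
      and pm: "is_pmf2 SU (A X) p" and le: "mutual_info SU (A X) p \<le> s"
      unfolding FIset_def qk_def[abs_def] by blast
    have "e \<le> mutual_info SU (PiE T A) (qk T p)" unfolding e by (rule mono_mi[OF VT T pm])
    also have "\<dots> \<le> F_I (A X) (PiE T A) (net_kernel Vs pa A K X T) s"
      using cT.FI_ge[OF pm le] unfolding qk_def[abs_def] .
    finally show "e \<le> F_I (A X) (PiE T A) (net_kernel Vs pa A K X T) s" .
  qed
qed

lemma netFc_eq: "net_F_c Vs pa A K X S = concave_majorant (net_F Vs pa A K X S)"
  unfolding net_F_c_def F_I_c_def net_F_def ..

end

context cmaj
begin

lemma comb:
  assumes "F1 \<le> f1" "G1 \<le> g1" "F1 \<le> G1" "f1 \<le> g1"
  shows "F1 + concave_majorant F (G1 - F1) \<le> f1 + concave_majorant F (g1 - f1)"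
proof (cases "G1 \<le> f1")
  case True
  have "concave_majorant F (G1 - F1) \<le> G1 - F1" using cm_le_id assms by simp
  moreover have "0 \<le> concave_majorant F (g1 - f1)" using cm_nonneg assms by simp
  ultimately show ?thesis using True by simp
next
  case False
  have "concave_majorant F (G1 - F1) - concave_majorant F (G1 - f1) \<le> (G1 - F1) - (G1 - f1)"
    using cm_lip[of "G1 - f1" "G1 - F1"] False assms by simp
  moreover have "concave_majorant F (G1 - f1) \<le> concave_majorant F (g1 - f1)"
    using cm_mono[of "G1 - f1" "g1 - f1"] False assms by simp
  ultimately show ?thesis by simp
qed

end

theorem theorem7:
  fixes Vs :: "'v::linorder set" and pa :: "'v \<Rightarrow> 'v set" and A :: "'v \<Rightarrow> 'a set"
    and K :: "'v \<Rightarrow> ('v \<Rightarrow> 'a) \<Rightarrow> 'a \<Rightarrow> real" and X W :: 'v and V :: "'v set"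
  assumes net: "bayes_net Vs pa A K X"
    and W: "W \<in> Vs" "W \<notin> V" "W \<noteq> X"
    and V: "V \<subseteq> Vs" "\<forall>v\<in>V. v < W"
  shows "(\<forall>t\<ge>0. net_F Vs pa A K X (V \<union> {W}) t
            \<le> net_F Vs pa A K X V t
              + node_F_c pa A K W (net_F Vs pa A K X (V \<union> pa W) t - net_F Vs pa A K X V t))
       \<and> (\<forall>t\<ge>0. net_F_c Vs pa A K X (V \<union> {W}) t
            \<le> net_F_c Vs pa A K X V t
              + node_F_c pa A K W (net_F_c Vs pa A K X (V \<union> pa W) t - net_F_c Vs pa A K X V t))
       \<and> (let R = (\<lambda>t. net_F_c Vs pa A K X V t
              + node_F_c pa A K W (net_F_c Vs pa A K X (V \<union> pa W) t - net_F_c Vs pa A K X V t))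
         in (\<forall>t\<ge>0. 0 \<le> R t) \<and> concave_on {0..} R \<and> mono_on {0..} R \<and> (\<forall>t\<ge>0. R t \<le> t))"
proof -
  interpret bn Vs pa A K X by (rule bn.intro[OF net])
  define T where "T = V \<union> pa W"
  have TV: "T \<subseteq> Vs" "V \<subseteq> T" unfolding T_def using V paV[OF W(1)] by auto
  have Y1V: "V \<union> {W} \<subseteq> Vs" using V W by auto
  define Fv where "Fv = net_F Vs pa A K X V"
  define Ft where "Ft = net_F Vs pa A K X T"
  define Fw where "Fw = net_F Vs pa A K X (V \<union> {W})"
  define f where "f = net_F_c Vs pa A K X V"
  define g where "g = net_F_c Vs pa A K X T"
  define fw where "fw = net_F_c Vs pa A K X (V \<union> {W})"
  define h where "h = node_F_c pa A K W"
  define Fn where "Fn = F_I (PiE (pa W) A) (A W) (K W)"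
  have hF: "h = concave_majorant Fn" unfolding h_def Fn_def node_F_c_def F_I_c_def ..
  interpret ch: cmaj Fn unfolding Fn_def by (rule cmaj_node[OF W(1,3)])
  interpret cv: cmaj Fv unfolding Fv_def by (rule cmaj_net[OF V(1)])
  interpret ct: cmaj Ft unfolding Ft_def by (rule cmaj_net[OF TV(1)])
  interpret cw: cmaj Fw unfolding Fw_def by (rule cmaj_net[OF Y1V])
  have fF: "f = concave_majorant Fv" unfolding f_def Fv_def netFc_eq ..
  have gF: "g = concave_majorant Ft" unfolding g_def Ft_def netFc_eq ..
  have fwF: "fw = concave_majorant Fw" unfolding fw_def Fw_def netFc_eq ..
  have Fvt: "\<forall>s\<ge>0. Fv s \<le> Ft s" unfolding Fv_def Ft_def using netF_mono[OF TV(2,1)] by blast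
  have fg: "f s \<le> g s" if "s \<ge> 0" for s
    unfolding fF gF by (rule cm_compare[OF cv.cmaj_axioms ct.cmaj_axioms Fvt that])
  have first: "Fw t \<le> Fv t + h (Ft t - Fv t)" if t: "t \<ge> 0" for t
  proof -
    interpret cW: chan "A X" "PiE (V \<union> {W}) A" "net_kernel Vs pa A K X (V \<union> {W})" by (rule chan_net[OF Y1V])
    interpret cV: chan "A X" "PiE V A" "net_kernel Vs pa A K X V" by (rule chan_net[OF V(1)])
    interpret cT: chan "A X" "PiE T A" "net_kernel Vs pa A K X T" by (rule chan_net[OF TV(1)])
    show ?thesis unfolding Fw_def net_F_def F_I_eq[of "A X" "PiE (V \<union> {W}) A"]
    proof (rule cSup_least)
      show "FIset (A X) (PiE (V \<union> {W}) A) (net_kernel Vs pa A K X (V \<union> {W})) t \<noteq> {}" using cW.FIset_0[OF t] by blast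
      fix e assume "e \<in> FIset (A X) (PiE (V \<union> {W}) A) (net_kernel Vs pa A K X (V \<union> {W})) t"
      then obtain SU :: "nat set" and p where e: "e = mutual_info SU (PiE (V \<union> {W}) A) (qk (V \<union> {W}) p)"
        and pm: "is_pmf2 SU (A X) p" and le: "mutual_info SU (A X) p \<le> t"
        unfolding FIset_def qk_def[abs_def] by blast
      define a where "a = mutual_info SU (PiE V A) (qk V p)"
      define b where "b = mutual_info SU (PiE T A) (qk T p)"
      have c: "e \<le> a + h (b - a)" unfolding e a_def b_def h_def T_def by (rule core[OF W(1,3,2) V pm])
      have aF: "a \<le> Fv t" unfolding a_def Fv_def net_F_def using cV.FI_ge[OF pm le] unfolding qk_def[abs_def] .
      have bF: "b \<le> Ft t" unfolding b_def Ft_def net_F_def using cT.FI_ge[OF pm le] unfolding qk_def[abs_def] .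
      have ab: "a \<le> b" unfolding a_def b_def by (rule mono_mi[OF TV(2,1) pm])
      have "a + h (b - a) \<le> Fv t + h (Ft t - Fv t)"
        unfolding hF by (rule ch.comb[OF aF bF ab]) (use Fvt t in auto)
      thus "e \<le> Fv t + h (Ft t - Fv t)" using c by simp
    qed
  qed
  define R where "R t = f t + h (g t - f t)" for t
  have R0: "0 \<le> R t" if "t \<ge> 0" for t
    unfolding R_def fF hF using cv.cm_nonneg[OF that] ch.cm_nonneg fg[OF that] unfolding fF gF
    by (simp add: add_nonneg_nonneg)
  have Rle: "R t \<le> t" if t: "t \<ge> 0" for t
  proof -
    have "h (g t - f t) \<le> g t - f t" unfolding hF using ch.cm_le_id fg[OF t] by simp
    moreover have "g t \<le> t" unfolding gF using ct.cm_le_id[OF t] .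
    ultimately show ?thesis unfolding R_def by simp
  qed
  have Rmono: "mono_on {0..} R"
  proof (rule mono_onI)
    fix r s :: real assume r: "r \<in> {0..}" and s: "s \<in> {0..}" and rs: "r \<le> s"
    have "f r \<le> f s" unfolding fF using cv.cm_mono r rs by simp
    moreover have "g r \<le> g s" unfolding gF using ct.cm_mono r rs by simp
    ultimately show "R r \<le> R s" unfolding R_def hF
      using ch.comb[of "f r" "f s" "g r" "g s"] fg r s by simp
  qed
  have Rconc: "concave_on {0..} R"
    unfolding concave_on_iff
  proof (intro conjI ballI allI impI)
    show "convex {0::real..}" by (simp add: convex_real_interval)
    fix x y u v :: real
    assume x: "x \<in> {0..}" and y: "y \<in> {0..}" and u: "0 \<le> u" and v: "0 \<le> v" and uv: "u + v = 1"
    define m where "m = u *\<^sub>R x + v *\<^sub>R y"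
    have m0: "m \<ge> 0" using x y u v unfolding m_def by simp
    have fm: "u * f x + v * f y \<le> f m"
      using cv.cm_concave x y u v uv unfolding fF m_def concave_on_iff by blast
    have gm: "u * g x + v * g y \<le> g m"
      using ct.cm_concave x y u v uv unfolding gF m_def concave_on_iff by blast
    have fgx: "f x \<le> g x" "f y \<le> g y" "f m \<le> g m" using fg x y m0 by auto
    have b1: "u * f x + v * f y \<le> u * g x + v * g y"
      using fgx u v by (simp add: add_mono mult_left_mono)
    have "(u * f x + v * f y) + h ((u * g x + v * g y) - (u * f x + v * f y)) \<le> f m + h (g m - f m)"
      unfolding hF by (rule ch.comb[OF fm gm b1 fgx(3)])
    moreover have "u * h (g x - f x) + v * h (g y - f y) \<le> h (u *\<^sub>R (g x - f x) + v *\<^sub>R (g y - f y))"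
      using ch.cm_concave fgx u v uv unfolding hF concave_on_iff by auto
    moreover have "u *\<^sub>R (g x - f x) + v *\<^sub>R (g y - f y) = (u * g x + v * g y) - (u * f x + v * f y)"
      by (simp add: algebra_simps)
    ultimately show "u * R x + v * R y \<le> R (u *\<^sub>R x + v *\<^sub>R y)"
      unfolding R_def m_def[symmetric] by (simp add: algebra_simps)
  qed
  have second: "fw t \<le> R t" if t: "t \<ge> 0" for t
    unfolding fwF
  proof (rule cw.cm_le[OF t Rconc], intro allI impI)
    fix s :: real assume s: "s \<ge> 0"
    have "Fw s \<le> Fv s + h (Ft s - Fv s)" by (rule first[OF s])
    also have "\<dots> \<le> f s + h (g s - f s)" unfolding hF
      by (rule ch.comb) (use cv.cm_ge[OF s] ct.cm_ge[OF s] Fvt s fg[OF s] in \<open>auto simp: fF gF\<close>)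
    finally show "Fw s \<le> R s" unfolding R_def .
  qed
  show ?thesis
    unfolding Let_def R_def[symmetric, unfolded f_def g_def T_def h_def]
    using first second R0 Rconc Rmono Rle
    unfolding Fw_def Fv_def Ft_def T_def h_def fw_def f_def g_def R_def
    by auto
qed

end
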